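(* Suppose that $A$ is to be inserted to $(t_{\lceil\alpha(r-1)i\rceil+1},\ldots,t_{\lceil\alpha(r)i\rceil-1})$ for an even $i$. Then 2Merge requires \[ {\cal A}(r)= \lceil\lg w_r\rceil + 7-4\sqrt{2} - \frac{10-6\sqrt{2}}{p_r} + \frac{3-2\sqrt{2}}{p_r^2}\pm O\left(\frac{2^{r/2}}{i}\right) \] comparisons on average at Step~3. Furthermore, the expected value of ${\cal A}(r)$ is $\mathbf{Pr}[r=1]{\cal A}(1)+\mathbf{Pr}[r=2]{\cal A}(2)+\cdots = \lceil\lg i\rceil + {\cal T}(i)$, where \[ {\cal T}(i) = 5-4\sqrt{2} - \frac{1}{p_i} + \frac{1}{6 p^2_i} + \begin{cases} -\frac{1}{6 p_i} - \frac{1}{16p^2_i} -\frac{2}{3} & p_i \in (1/2, \frac{1+\sqrt{2}}{4}], \\ -\frac{\sqrt{2}}{3 p_i} -\frac{1}{3} & p_i \in (\frac{1+\sqrt{2}}{4}, \frac{2+\sqrt{2}}{4}], \\ -\frac{4}{3p_i} + \frac{1}{4p^2_i} + \frac{1}{3} & p_i \in (\frac{2+\sqrt{2}}{4}, 1]. \end{cases} \]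
   Context: $\lg=\log_2$, and for real $x>0$, $p_x = x/2^{\lceil \lg x\rceil}$. RHBS$(A,T)$, $T=(t_1,\dots,t_m)$ sorted: if $m\le 3\cdot 2^{\lceil\lg(m+1)\rceil-2}-1$ let $d=2^{\lceil\lg(m+1)\rceil-2}$, else $d=m-2^{\lceil\lg(m+1)\rceil-1}+1$; compare $A$ with $t_d$ and recurse on the left or right part (the number of comparisons is monotone nondecreasing in the position of $A$). 2Merge$(A,B,T)$ with $T=(t_1,\dots,t_{i-2})$ sorted, $i$ even, $i\ge4$: Step 1 compare $A,B$ and swap so $A<B$. Step 2: with $\alpha(r)=1-2^{-r/2}$, for $r=1,2,\dots$ up to $2\lg i$ compare $A$ with $t_{\lceil\alpha(r)i\rceil}$, stopping at the first $r$ with $A<t_{\lceil\alpha(r)i\rceil}$. Step 3: insert $A$ into $(t_{\lceil\alpha(r-1)i\rceil+1},\dots,t_{\lceil\alpha(r)i\rceil-1})$ by RHBS. Step 4: insert $B$ by RHBS into the part of $T$ right of $A$. The two inserted elements occupy uniformly random distinct positions among the $i$ positions, so given $A<B$, the probability that $A$ falls between $t_{\ell-1}$ and $t_\ell$ is $(i-\ell)/\binom{i}{2}$. Here $w_r := (\sqrt{2}-1)2^{-r/2}i$ (not necessarily integral) and $p_r := p_{w_r} = w_r/2^{\lceil\lg w_r\rceil}$; $r$ is the number of comparisons made in Step 2. *)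

theory Defs
  imports "HOL-Analysis.Analysis" "HOL-Library.Log_Nat"
begin

text \<open>Pivot index d of RHBS on a sorted list of m elements, with k = ceil(lg(m+1)):
  if m <= 3*2^(k-2) - 1 (equivalently 4(m+1) <= 3*2^k) then d = 2^(k-2),
  else d = m - 2^(k-1) + 1.\<close>
definition rhbs_pivot :: "nat \<Rightarrow> nat" where
  "rhbs_pivot m = (let k = ceillog2 (m + 1) in
     if 4 * (m + 1) \<le> 3 * 2 ^ k then 2 ^ (k - 2) else m + 1 - 2 ^ (k - 1))"

lemma rhbs_pivot_bounds:
  assumes "m > 0" shows "1 \<le> rhbs_pivot m \<and> rhbs_pivot m \<le> m"
proof -
  define k where "k = ceillog2 (m + 1)"
  have up: "m + 1 \<le> 2 ^ k" unfolding k_def by (rule le_two_power_ceillog2)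
  have lo: "2 ^ k < 2 * (m + 1)" unfolding k_def by (rule two_power_ceillog2_gt) simp
  have k1: "k \<ge> 1" using up assms
    by (cases k) auto
  show ?thesis
  proof (cases "4 * (m + 1) \<le> 3 * 2 ^ k")
    case True
    have k2: "k \<ge> 2"
    proof (rule ccontr)
      assume "\<not> 2 \<le> k" then have "k \<le> 1" by simp
      then have "(2::nat) ^ k \<le> 2 ^ 1" by (intro power_increasing) auto
      then show False using True assms by simp
    qed
    have e: "(2::nat) ^ k = 4 * 2 ^ (k - 2)"
    proof -
      have "k = 2 + (k - 2)" using k2 by simp
      then have "(2::nat) ^ k = 2 ^ 2 * 2 ^ (k - 2)" by (metis power_add)
      then show ?thesis by simp
    qed
    have "4 * 2 ^ (k - 2) < 2 * (m + 1)" using lo e by simp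
    moreover have "\<And>x::nat. 4 * x < 2 * (m + 1) \<Longrightarrow> x \<le> m" by presburger
    ultimately have "2 ^ (k - 2) \<le> m" by blast
    moreover have "1 \<le> (2::nat) ^ (k - 2)" by simp
    ultimately show ?thesis using True unfolding rhbs_pivot_def k_def[symmetric] Let_def by simp
  next
    case False
    have e: "(2::nat) ^ k = 2 * 2 ^ (k - 1)"
    proof -
      have "k = 1 + (k - 1)" using k1 by simp
      then have "(2::nat) ^ k = 2 ^ 1 * 2 ^ (k - 1)" by (metis power_add)
      then show ?thesis by simp
    qed
    have "2 ^ (k - 1) \<le> m" using lo e by simp
    moreover have "1 \<le> (2::nat) ^ (k - 1)" by simp
    moreover have "\<And>x::nat. x \<le> m \<Longrightarrow> 1 \<le> x \<Longrightarrow> 1 \<le> m + 1 - x \<and> m + 1 - x \<le> m" by arith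
    ultimately have "1 \<le> m + 1 - 2 ^ (k - 1) \<and> m + 1 - 2 ^ (k - 1) \<le> m" by blast
    then show ?thesis using False unfolding rhbs_pivot_def k_def[symmetric] Let_def by simp
  qed
qed

text \<open>rhbs m j: number of comparisons RHBS makes to insert A into a sorted list
  (t_1,...,t_m) when A falls into gap j (1 <= j <= m+1), i.e. between t_(j-1) and t_j.\<close>
function rhbs :: "nat \<Rightarrow> nat \<Rightarrow> nat" where
  "rhbs m j = (if m = 0 then 0 else
     (let d = rhbs_pivot m in
        if j \<le> d then 1 + rhbs (d - 1) j else 1 + rhbs (m - d) (j - d)))"
  by auto
termination
proof (relation "Wellfounded.measure fst", goal_cases)
  case 1 then show ?case by simp
next
  case (2 m j d)
  then have "d \<le> m" using rhbs_pivot_bounds[of m] by simp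
  then show ?case using 2 by simp
next
  case (3 m j d)
  then have "1 \<le> d" using rhbs_pivot_bounds[of m] by simp
  then show ?case using 3 by simp
qed

declare rhbs.simps [simp del]

definition alpha :: "nat \<Rightarrow> real" where
  "alpha r = 1 - 2 powr (- real r / 2)"

text \<open>Index ceil(alpha(r) i) of the element compared in the r-th comparison of Step 2
  (for r = 0 this is 0).\<close>
definition cidx :: "nat \<Rightarrow> nat \<Rightarrow> nat" where
  "cidx i r = nat \<lceil>alpha r * real i\<rceil>"

text \<open>Step 2 is performed for r = 1, 2, ... up to 2 lg i.\<close>
definition rmax :: "nat \<Rightarrow> nat" where
  "rmax i = nat \<lfloor>2 * log 2 (real i)\<rfloor>"

text \<open>Positions: A falls between t_(l-1) and t_l, l in {1..i-1} (given A < B).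
  A < t_c iff l <= c.  Number r of Step-2 comparisons.\<close>
definition step2 :: "nat \<Rightarrow> nat \<Rightarrow> nat" where
  "step2 i l = (LEAST r. 1 \<le> r \<and> r \<le> rmax i \<and> l \<le> cidx i r)"

definition posprob :: "nat \<Rightarrow> nat \<Rightarrow> real" where
  "posprob i l = real (i - l) / real (i choose 2)"

text \<open>Comparisons of Step 3: RHBS of A into (t_(c(r-1)+1), ..., t_(c(r)-1)).\<close>
definition step3 :: "nat \<Rightarrow> nat \<Rightarrow> nat" where
  "step3 i l = (let r = step2 i l; lo = cidx i (r - 1); hi = cidx i r
                in rhbs (hi - lo - 1) (l - lo))"

definition positions_r :: "nat \<Rightarrow> nat \<Rightarrow> nat set" where
  "positions_r i r = {l \<in> {1..i - 1}. step2 i l = r}"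

definition PrR :: "nat \<Rightarrow> nat \<Rightarrow> real" where
  "PrR i r = (\<Sum>l\<in>positions_r i r. posprob i l)"

text \<open>Average number of Step-3 comparisons given that Step 2 made r comparisons.\<close>
definition Acal :: "nat \<Rightarrow> nat \<Rightarrow> real" where
  "Acal i r = (\<Sum>l\<in>positions_r i r. posprob i l * real (step3 i l)) / PrR i r"

definition expected_step3 :: "nat \<Rightarrow> real" where
  "expected_step3 i = (\<Sum>r\<in>{1..rmax i}. PrR i r * Acal i r)"

definition px :: "real \<Rightarrow> real" where
  "px x = x / 2 powr real_of_int \<lceil>log 2 x\<rceil>"

definition wr :: "nat \<Rightarrow> nat \<Rightarrow> real" where
  "wr i r = (sqrt 2 - 1) * 2 powr (- real r / 2) * real i"

definition Tcal :: "nat \<Rightarrow> real" where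
  "Tcal i = (let p = px (real i) in
     5 - 4 * sqrt 2 - 1 / p + 1 / (6 * p\<^sup>2) +
     (if p \<le> (1 + sqrt 2) / 4 then - 1 / (6 * p) - 1 / (16 * p\<^sup>2) - 2 / 3
      else if p \<le> (2 + sqrt 2) / 4 then - sqrt 2 / (3 * p) - 1 / 3
      else - 4 / (3 * p) + 1 / (4 * p\<^sup>2) + 1 / 3))"

end

theory Submission
  imports Defs
begin


lemma ceillog2_eq_iff: "1 \<le> n \<Longrightarrow> n \<le> 2^K \<Longrightarrow> 2^K < 2*n \<Longrightarrow> ceillog2 n = K"
  by (rule ceillog2_eqI)

lemma rhbs_closed:
  "1 \<le> n \<Longrightarrow> 1 \<le> j \<Longrightarrow> j \<le> n \<Longrightarrow>
   rhbs (n-1) j = (if j + n \<le> 2^ceillog2 n then ceillog2 n - 1 else ceillog2 n)"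
proof (induction n arbitrary: j rule: less_induct)
  case (less n)
  define K where "K = ceillog2 n"
  have up: "n \<le> 2^K" unfolding K_def by (rule le_two_power_ceillog2)
  have lo: "2^K < 2*n" unfolding K_def using less.prems by (intro two_power_ceillog2_gt) simp
  show ?case
  proof (cases "n = 1")
    case True then show ?thesis using less.prems by (simp add: rhbs.simps)
  next
    case False
    then have n2: "n \<ge> 2" using less.prems by simp
    have K1: "K \<ge> 1" using up n2 by (cases K) auto
    have ck: "ceillog2 (n - 1 + 1) = K" using less.prems K_def by simp
    show ?thesis
    proof (cases "4 * n \<le> 3 * 2 ^ K")
      case True
      have K2: "K \<ge> 2"
      proof (rule ccontr)
        assume "\<not> 2 \<le> K" then have "K = 1" using K1 by simp
        then show False using True n2 by simp
      qed
      define d where "d = (2::nat)^(K-2)"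
      obtain K' where K': "K = Suc (Suc K')" using K2 by (metis add_2_eq_Suc le_Suc_ex)
      have e: "(2::nat)^K = 4 * d" unfolding d_def using K' by simp
      have e1: "(2::nat)^(K-1) = 2 * d" unfolding d_def using K' by simp
      have piv: "rhbs_pivot (n-1) = d"
        unfolding rhbs_pivot_def Let_def using ck True less.prems by (simp add: d_def)
      have d1: "d \<ge> 1" unfolding d_def by simp
      have r: "rhbs (n-1) j = (if j \<le> d then 1 + rhbs (d - 1) j else 1 + rhbs (n - 1 - d) (j - d))"
        using piv n2 by (subst rhbs.simps) (simp add: Let_def)
      show ?thesis
      proof (cases "j \<le> d")
        case True
        have cd: "ceillog2 d = K - 2" unfolding d_def by simp
        have "d < n" using lo e by simp
        then have "rhbs (d-1) j = (if j + d \<le> 2^ceillog2 d then ceillog2 d - 1 else ceillog2 d)"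
          using less.IH[of d j] d1 True less.prems by simp
        also have "\<dots> = K - 2" using cd d_def less.prems True by simp
        finally show ?thesis using r True \<open>4 * n \<le> 3 * 2 ^ K\<close> e K2 K_def by simp
      next
        case False
        define n' where "n' = n - d"
        have dn: "d < n" using lo e by simp
        have cn: "ceillog2 n' = K - 1"
          apply (rule ceillog2_eqI) using up lo e e1 \<open>4 * n \<le> 3 * 2 ^ K\<close> unfolding n'_def by auto
        have "n' < n" "1 \<le> n'" using lo e d1 unfolding n'_def by auto
        then have IH: "rhbs (n'-1) (j-d) = (if j - d + n' \<le> 2^(K-1) then K - 2 else K - 1)"
          using less.IH[of n' "j-d"] False less.prems cn unfolding n'_def by (simp add: diff_diff_add numeral_2_eq_2)
        have nn: "n - 1 - d = n' - 1" unfolding n'_def by simp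
        have c: "(j - d + n' \<le> 2^(K-1)) = (j + n \<le> 2^K)" using e e1 False dn unfolding n'_def by auto
        have sk: "1 + (K - 2) = K - 1" "1 + (K - 1) = K" using K2 by auto
        have "rhbs (n-1) j = 1 + rhbs (n'-1) (j-d)" using r False nn by simp
        also have "\<dots> = (if j + n \<le> 2^K then K - 1 else K)" using IH c sk by simp
        finally show ?thesis using K_def by simp
      qed
    next
      case False
      define d where "d = n - 2^(K-1)"
      obtain K' where K': "K = Suc K'" using K1 by (cases K) auto
      have e: "(2::nat)^K = 2 * 2^(K-1)" using K' by simp
      have piv: "rhbs_pivot (n-1) = d"
        unfolding rhbs_pivot_def Let_def using ck False less.prems by (simp add: d_def)
      have d1: "d \<ge> 1" and dn: "d < n" unfolding d_def using lo e by auto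
      have r: "rhbs (n-1) j = (if j \<le> d then 1 + rhbs (d - 1) j else 1 + rhbs (n - 1 - d) (j - d))"
        using piv n2 by (subst rhbs.simps) (simp add: Let_def)
      have cd: "ceillog2 d = K - 1"
        apply (rule ceillog2_eqI) using up lo e False unfolding d_def by auto
      show ?thesis
      proof (cases "j \<le> d")
        case True
        then have IH: "rhbs (d-1) j = (if j + d \<le> 2^ceillog2 d then ceillog2 d - 1 else ceillog2 d)"
          using less.IH[of d j] d1 dn True less.prems by simp
        have c: "(j + d \<le> 2^(K-1)) = (j + n \<le> 2^K)" using e lo unfolding d_def by arith
        have sk: "j + n \<le> 2^K \<Longrightarrow> 1 + (K-1-1) = K-1" using K' less.prems up lo by (cases K') auto
        have "rhbs (n-1) j = 1 + rhbs (d-1) j" using r True by simp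
        also have "\<dots> = (if j + n \<le> 2^K then K-1 else K)" using IH cd c sk K' by auto
        finally show ?thesis using K_def by simp
      next
        case jd: False
        have h1: "n - 1 - d = 2^(K-1) - 1" unfolding d_def using up e lo by arith
        have hl: "2^(K-1) < n" "1 \<le> (2::nat)^(K-1)" "1 \<le> j - d" "j - d \<le> 2^(K-1)" using e lo jd less.prems unfolding d_def by arith+
        have "rhbs (2^(K-1) - 1) (j - d) = K - 1"
          using less.IH[OF hl] jd unfolding d_def by simp
        moreover have "\<not> j + n \<le> 2^K" using jd False e lo unfolding d_def by arith
        ultimately show ?thesis using r jd K_def K' h1 by auto
      qed
    qed
  qed
qed


definition kk :: "real \<Rightarrow> int" where "kk y = \<lceil>log 2 y\<rceil>"
definition uf :: "int \<Rightarrow> real \<Rightarrow> real" where "uf j y = real_of_int j + 1 - 2 powr j / y"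
definition vf :: "int \<Rightarrow> real \<Rightarrow> real" where "vf j y = (2 powr j / y - 1) * (2 - 2 powr j / y)"
definition mu0 :: real where "mu0 = 3 - 2 * sqrt 2"
definition FF :: "real \<Rightarrow> real" where "FF w = uf (kk w) w - mu0 * vf (kk w) w"

lemma powr_m1: "(2::real) powr (real_of_int j - 1) = 2 powr j / 2"
  by (simp add: powr_diff)

lemma powr_p1: "(2::real) powr (real_of_int (j + 1)) = 2 * 2 powr j"
  by (simp add: powr_add)

lemma kk_bounds: assumes "y > 0" shows "2 powr (kk y - 1) < y" "y \<le> 2 powr (kk y)"
proof -
  have "real_of_int (kk y) - 1 < log 2 y" unfolding kk_def by linarith
  then show "2 powr (kk y - 1) < y" using less_log_iff[of 2 y] assms by simp
  have "log 2 y \<le> real_of_int (kk y)" unfolding kk_def by simp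
  then show "y \<le> 2 powr (kk y)" using log_le_iff[of 2 y] assms by simp
qed

lemma kk_unique: assumes "2 powr (real_of_int j - 1) < y" "y \<le> 2 powr j" shows "kk y = j"
proof -
  have y: "y > 0" using assms(1) by (smt (verit) powr_gt_zero)
  have "real_of_int j - 1 < log 2 y" using less_log_iff[of 2 y] y assms by simp
  moreover have "log 2 y \<le> real_of_int j" using log_le_iff[of 2 y] y assms by simp
  ultimately show ?thesis unfolding kk_def by (intro ceiling_unique) auto
qed

lemma dyadic_lip:
  fixes \<phi> :: "int \<Rightarrow> real \<Rightarrow> real"
  assumes lip: "\<And>j y z. 2 powr (real_of_int j - 1) \<le> y \<Longrightarrow> y \<le> z \<Longrightarrow> z \<le> 2 powr j \<Longrightarrow>
      \<bar>\<phi> j y - \<phi> j z\<bar> \<le> L * (z - y) / 2 powr j"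
    and cont: "\<And>j. \<phi> (j+1) (2 powr j) = \<phi> j (2 powr j)"
    and y: "0 < y" "y \<le> z" "z \<le> 2 * y" and L: "L \<ge> 0"
  shows "\<bar>\<phi> (kk y) y - \<phi> (kk z) z\<bar> \<le> L * (z - y) / y"
proof -
  define j where "j = kk y"
  define P where "P = (2::real) powr j"
  have P0: "P > 0" unfolding P_def by simp
  have b1: "P / 2 < y" "y \<le> P" using kk_bounds[OF y(1)] powr_m1[of j] unfolding j_def[symmetric] P_def by auto
  have fin: "L * (z - y) / P \<le> L * (z - y) / y"
    using b1 y L P0 by (intro divide_left_mono mult_nonneg_nonneg) auto
  show ?thesis
  proof (cases "z \<le> P")
    case True
    have "kk z = j" using True b1 y unfolding P_def by (intro kk_unique) (auto simp: powr_m1)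
    then have "\<bar>\<phi> (kk y) y - \<phi> (kk z) z\<bar> \<le> L * (z - y) / P"
      using lip[of j y z] b1 y True unfolding j_def P_def by (auto simp: powr_m1)
    then show ?thesis using fin by linarith
  next
    case False
    have e: "2 powr (real_of_int (j+1) - 1) = P" unfolding P_def by simp
    have e2: "2 powr (real_of_int (j+1)) = 2 * P" unfolding P_def by (simp add: powr_p1 del: of_int_add)
    have kz: "kk z = j + 1" using False b1 y by (intro kk_unique) (simp_all only: e e2)
    have l1: "\<bar>\<phi> j y - \<phi> j P\<bar> \<le> L * (P - y) / P"
      using lip[of j y P] b1 unfolding P_def by (auto simp: powr_m1)
    have l2: "\<bar>\<phi> (j+1) P - \<phi> (j+1) z\<bar> \<le> L * (z - P) / (2 * P)"
      using lip[of "j+1" P z] b1 y False unfolding P_def by (auto simp: powr_p1 simp del: of_int_add)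
    have l3: "L * (z - P) / (2 * P) \<le> L * (z - P) / P"
      using L False P0 by (intro divide_left_mono mult_nonneg_nonneg) auto
    have "L * (P - y) / P + L * (z - P) / P = L * (z - y) / P" using P0 by (simp add: field_simps)
    moreover have "\<phi> (j+1) P = \<phi> j P" using cont[of j] unfolding P_def .
    ultimately have "\<bar>\<phi> j y - \<phi> (j+1) z\<bar> \<le> L * (z - y) / P"
      using l1 l2 l3 by linarith
    then have "\<bar>\<phi> (kk y) y - \<phi> (kk z) z\<bar> \<le> L * (z - y) / P" using kz j_def by simp
    then show ?thesis using fin by linarith
  qed
qed

lemma dyadic_lip_sym:
  fixes \<phi> :: "int \<Rightarrow> real \<Rightarrow> real"
  assumes lip: "\<And>j y z. 2 powr (real_of_int j - 1) \<le> y \<Longrightarrow> y \<le> z \<Longrightarrow> z \<le> 2 powr j \<Longrightarrow>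
      \<bar>\<phi> j y - \<phi> j z\<bar> \<le> L * (z - y) / 2 powr j"
    and cont: "\<And>j. \<phi> (j+1) (2 powr j) = \<phi> j (2 powr j)"
    and y: "0 < y" "0 < z" "z \<le> 2 * y" "y \<le> 2 * z" and L: "L \<ge> 0"
  shows "\<bar>\<phi> (kk y) y - \<phi> (kk z) z\<bar> \<le> L * \<bar>z - y\<bar> / min y z"
proof (cases "y \<le> z")
  case True
  then show ?thesis using dyadic_lip[OF lip cont, of y z] y L by (simp add: min_def)
next
  case False
  then show ?thesis using dyadic_lip[OF lip cont, of z y] y L by (simp add: min_def abs_minus_commute)
qed

lemma uf_lip: assumes "2 powr (real_of_int j - 1) \<le> y" "y \<le> z" "z \<le> 2 powr j"
  shows "\<bar>uf j y - uf j z\<bar> \<le> 4 * (z - y) / 2 powr j"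
proof -
  define P where "P = (2::real) powr j"
  have P0: "P > 0" unfolding P_def by simp
  have h: "P/2 \<le> y" "y \<le> z" "z \<le> P" using assms unfolding P_def powr_m1 by auto
  have y0: "y > 0" using h P0 by linarith
  have "uf j y - uf j z = - (P * (z - y) / (y * z))" unfolding uf_def P_def[symmetric]
    using y0 h by (simp add: field_simps)
  moreover have "P * (z - y) / (y * z) \<le> 4 * (z - y) / P"
  proof -
    have "P * P \<le> 4 * (y * z)" using h P0 mult_mono[of "P/2" y "P/2" z] by auto
    then have "P / (y * z) \<le> 4 / P" using P0 y0 h by (simp add: divide_simps)
    then have "(z - y) * (P / (y * z)) \<le> (z - y) * (4 / P)" using h by (intro mult_left_mono) auto
    then show ?thesis by (simp add: field_simps)
  qed
  moreover have "P * (z - y) / (y * z) \<ge> 0" using h y0 P0 by simp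
  ultimately show ?thesis unfolding P_def by simp
qed

lemma inv_lip: fixes P y z :: real assumes "P/2 \<le> y" "y \<le> z" "z \<le> P" "P > 0"
  shows "0 \<le> P/y - P/z" "P/y - P/z \<le> 4 * (z - y) / P"
proof -
  have y0: "y > 0" using assms by linarith
  have e: "P/y - P/z = P * (z - y) / (y * z)" using y0 assms by (simp add: field_simps)
  have "P * P \<le> 4 * (y * z)" using assms mult_mono[of "P/2" y "P/2" z] by auto
  then have "P / (y * z) \<le> 4 / P" using assms y0 by (simp add: divide_simps)
  then have "(z - y) * (P / (y * z)) \<le> (z - y) * (4 / P)" using assms by (intro mult_left_mono) auto
  then show "P/y - P/z \<le> 4 * (z - y) / P" unfolding e by (simp add: field_simps)
  show "0 \<le> P/y - P/z" unfolding e using assms y0 by simp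
qed

lemma vf_lip: assumes "2 powr (real_of_int j - 1) \<le> y" "y \<le> z" "z \<le> 2 powr j"
  shows "\<bar>vf j y - vf j z\<bar> \<le> 4 * (z - y) / 2 powr j"
proof -
  define P where "P = (2::real) powr j"
  have P0: "P > 0" unfolding P_def by simp
  have h: "P/2 \<le> y" "y \<le> z" "z \<le> P" using assms unfolding P_def powr_m1 by auto
  have y0: "y > 0" using h P0 by linarith
  define q where "q = P/y - 1"
  define r where "r = P/z - 1"
  have q: "0 \<le> q" "q \<le> 1" using h y0 P0 unfolding q_def by (auto simp: field_simps)
  have r: "0 \<le> r" "r \<le> 1" using h y0 P0 unfolding r_def by (auto simp: field_simps)
  have il: "0 \<le> q - r" "q - r \<le> 4 * (z - y) / P" using inv_lip[OF h P0] unfolding q_def r_def by auto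
  have "vf j y - vf j z = (q - r) * (1 - q - r)" unfolding vf_def P_def[symmetric] q_def r_def
    by (simp add: algebra_simps)
  moreover have "\<bar>(q - r) * (1 - q - r)\<bar> \<le> (q - r) * 1"
  proof -
    have "\<bar>1 - q - r\<bar> \<le> 1" using q r by linarith
    then have "\<bar>q - r\<bar> * \<bar>1 - q - r\<bar> \<le> \<bar>q - r\<bar> * 1" by (intro mult_left_mono) auto
    then show ?thesis using il by (simp add: abs_mult)
  qed
  ultimately show ?thesis using il unfolding P_def by simp
qed

lemma uf_cont: "uf (j+1) (2 powr j) = uf j (2 powr j)"
  unfolding uf_def by (simp add: powr_p1 del: of_int_add)

lemma vf_cont: "vf (j+1) (2 powr j) = vf j (2 powr j)"
  unfolding vf_def by (simp add: powr_p1 del: of_int_add)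

lemma uf_dlip: "0 < y \<Longrightarrow> 0 < z \<Longrightarrow> z \<le> 2 * y \<Longrightarrow> y \<le> 2 * z \<Longrightarrow>
   \<bar>uf (kk y) y - uf (kk z) z\<bar> \<le> 4 * \<bar>z - y\<bar> / min y z"
  by (rule dyadic_lip_sym[OF uf_lip uf_cont]) auto

lemma vf_dlip: "0 < y \<Longrightarrow> 0 < z \<Longrightarrow> z \<le> 2 * y \<Longrightarrow> y \<le> 2 * z \<Longrightarrow>
   \<bar>vf (kk y) y - vf (kk z) z\<bar> \<le> 4 * \<bar>z - y\<bar> / min y z"
  by (rule dyadic_lip_sym[OF vf_lip vf_cont]) auto

lemma aa_bounds: assumes "y > 0" shows "1 \<le> 2 powr (kk y) / y" "2 powr (kk y) / y < 2"
  using kk_bounds[OF assms] powr_m1[of "kk y"] assms by (auto simp: field_simps)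

lemma uf_bounds: assumes "y > 0" shows "real_of_int (kk y) - 1 < uf (kk y) y" "uf (kk y) y \<le> kk y"
  using aa_bounds[OF assms] unfolding uf_def by auto

lemma vf_bounds: assumes "y > 0" shows "0 \<le> vf (kk y) y" "vf (kk y) y \<le> 1"
proof -
  define a where "a = 2 powr (kk y) / y"
  have a: "1 \<le> a" "a < 2" using aa_bounds[OF assms] unfolding a_def by auto
  have "vf (kk y) y = (a - 1) * (2 - a)" unfolding vf_def a_def by simp
  moreover have "0 \<le> (a - 1) * (2 - a)" using a by simp
  moreover have "(a - 1) * (2 - a) \<le> 1 * 1" using a by (intro mult_mono) auto
  ultimately show "0 \<le> vf (kk y) y" "vf (kk y) y \<le> 1" by auto
qed

lemma sqrt2_bounds: "sqrt 2 < (1.4143::real)" "(1.4142::real) < sqrt 2"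
proof -
  show "sqrt 2 < (1.4143::real)" by (rule real_less_lsqrt) (simp_all add: power2_eq_square)
  show "(1.4142::real) < sqrt 2" by (rule real_less_rsqrt) (simp add: power2_eq_square)
qed

lemma sqrt2_sq: "sqrt 2 * sqrt 2 = (2::real)" by simp

lemma mu0_bounds: "0 < mu0" "mu0 < 1"
proof -
  note s = sqrt2_bounds
  then show "0 < mu0" "mu0 < 1" unfolding mu0_def by auto
qed

lemma FF_kk: assumes "y > 0" shows "\<bar>FF y - kk y\<bar> \<le> 2"
proof -
  have "0 \<le> mu0 * vf (kk y) y" using vf_bounds[OF assms] mu0_bounds by simp
  moreover have "mu0 * vf (kk y) y \<le> 1 * 1" using vf_bounds[OF assms] mu0_bounds
    by (intro mult_mono) auto
  ultimately show ?thesis using uf_bounds[OF assms] unfolding FF_def by linarith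
qed

lemma FF_eq: assumes "w > 0"
  shows "FF w = real_of_int \<lceil>log 2 w\<rceil> + 7 - 4 * sqrt 2
                 - (10 - 6 * sqrt 2) / px w + (3 - 2 * sqrt 2) / (px w)\<^sup>2"
proof -
  define P where "P = 2 powr (kk w)"
  define a where "a = P / w"
  have P0: "P > 0" unfolding P_def by simp
  have px: "px w = w / P" unfolding px_def P_def kk_def by simp
  have a1: "(10 - 6 * sqrt 2) / px w = (10 - 6 * sqrt 2) * a" unfolding px a_def by simp
  have a2: "(3 - 2 * sqrt 2) / (px w)\<^sup>2 = (3 - 2 * sqrt 2) * a\<^sup>2"
    unfolding px a_def by (simp add: power_divide)
  have "FF w = real_of_int (kk w) + 1 - a - (3 - 2 * sqrt 2) * ((a - 1) * (2 - a))"
    unfolding FF_def uf_def vf_def mu0_def a_def P_def by simp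
  also have "\<dots> = real_of_int (kk w) + 7 - 4 * sqrt 2 - (10 - 6 * sqrt 2) * a + (3 - 2 * sqrt 2) * a\<^sup>2"
    by (simp add: algebra_simps power2_eq_square)
  finally show ?thesis unfolding a1 a2 kk_def by simp
qed


definition xr :: "nat \<Rightarrow> nat \<Rightarrow> real" where "xr i r = real i * 2 powr (- real r / 2)"
definition bb :: "nat \<Rightarrow> nat \<Rightarrow> nat" where "bb i r = nat \<lfloor>xr i r\<rfloor>"

lemma s2b: "sqrt 2 < (17/12::real)" "(7/5::real) < sqrt 2"
proof -
  show "sqrt 2 < (17/12::real)" by (rule real_less_lsqrt) (simp_all add: power2_eq_square)
  show "(7/5::real) < sqrt 2" by (rule real_less_rsqrt) (simp add: power2_eq_square)
qed

lemma xr_nonneg: "0 \<le> xr i r" unfolding xr_def by simp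

lemma xr_le: "xr i r \<le> real i"
proof -
  have "2 powr (- real r / 2) \<le> 2 powr 0" by (intro powr_mono) auto
  then show ?thesis unfolding xr_def by (simp add: mult_left_le)
qed

lemma xr_0: "xr i 0 = real i" unfolding xr_def by simp
lemma bb_0: "bb i 0 = i" unfolding bb_def xr_0 by simp

lemma xr_mono: "r \<le> r' \<Longrightarrow> xr i r' \<le> xr i r"
  unfolding xr_def by (intro mult_left_mono powr_mono) auto

lemma bb_mono: "r \<le> r' \<Longrightarrow> bb i r' \<le> bb i r"
  unfolding bb_def using xr_mono[of r r' i] by (intro nat_mono floor_mono) auto

lemma bb_le: "bb i r \<le> i"
  using bb_mono[of 0 r i] bb_0 by simp

lemma real_bb: "real (bb i r) = of_int \<lfloor>xr i r\<rfloor>"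
  unfolding bb_def using xr_nonneg[of i r] by simp

lemma bb_bounds: "real (bb i r) \<le> xr i r" "xr i r < real (bb i r) + 1"
  unfolding real_bb by linarith+

lemma xr_prev: "1 \<le> r \<Longrightarrow> xr i (r - 1) = sqrt 2 * xr i r"
proof -
  assume r: "1 \<le> r"
  have e: "- real (r - 1) / 2 = - real r / 2 + 1/2" using r by (simp add: of_nat_diff field_simps)
  have "2 powr (- real (r - 1) / 2) = 2 powr (- real r / 2 + 1/2)" unfolding e ..
  also have "\<dots> = 2 powr (- real r / 2) * 2 powr (1/2)" by (rule powr_add)
  finally have "2 powr (- real (r - 1) / 2) = 2 powr (- real r / 2) * 2 powr (1/2)" .
  moreover have "(2::real) powr (1/2) = sqrt 2" by (simp add: powr_half_sqrt)
  ultimately show ?thesis unfolding xr_def by simp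
qed

lemma cidx_eq: "cidx i r = i - bb i r"
proof -
  have "alpha r * real i = real i - xr i r" unfolding alpha_def xr_def by (simp add: algebra_simps)
  then have "\<lceil>alpha r * real i\<rceil> = int i - \<lfloor>xr i r\<rfloor>"
    using ceiling_diff_of_int[of "- xr i r" "- int i"] by (simp add: ceiling_minus)
  moreover have "\<lfloor>xr i r\<rfloor> \<le> int i" using xr_le[of i r] by linarith
  moreover have "0 \<le> \<lfloor>xr i r\<rfloor>" using xr_nonneg[of i r] by simp
  ultimately show ?thesis unfolding cidx_def bb_def by (simp add: nat_diff_distrib)
qed

lemma rmax_xr_ge1: assumes "1 \<le> i" "r \<le> rmax i" shows "1 \<le> xr i r"
proof -
  have h: "0 \<le> 2 * log 2 (real i)" using assms by simp
  have "int r \<le> \<lfloor>2 * log 2 (real i)\<rfloor>" using assms(2) h unfolding rmax_def by (simp add: le_nat_iff)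
  then have "real r \<le> 2 * log 2 (real i)" by (simp add: le_floor_iff)
  then have hl: "real r / 2 \<le> log 2 (real i)" by simp
  have "2 powr (real r / 2) \<le> real i" using le_log_iff[of 2 "real i" "real r / 2"] assms hl by simp
  then show ?thesis unfolding xr_def using assms by (simp add: powr_minus divide_simps)
qed

lemma rmax_xr_lt: assumes "1 \<le> i" shows "xr i (rmax i) < sqrt 2"
proof -
  have h: "0 \<le> 2 * log 2 (real i)" using assms by simp
  have "2 * log 2 (real i) < real (rmax i) + 1" unfolding rmax_def
    using h by (simp add: of_nat_nat)
  then have hl: "log 2 (real i) < (real (rmax i) + 1) / 2" by simp
  have "real i < 2 powr ((real (rmax i) + 1) / 2)"
    using log_less_iff[of 2 "real i" "(real (rmax i) + 1) / 2"] assms hl by simp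
  also have "\<dots> = 2 powr (real (rmax i) / 2) * 2 powr (1/2)" by (simp add: powr_add[symmetric] add_divide_distrib)
  finally have "real i < 2 powr (real (rmax i) / 2) * sqrt 2" by (simp add: powr_half_sqrt)
  then show ?thesis unfolding xr_def by (simp add: powr_minus divide_simps mult.commute)
qed

lemma bb_rmax: assumes "1 \<le> i" shows "bb i (rmax i) = 1"
proof -
  have "xr i (rmax i) < 2" using rmax_xr_lt[OF assms] s2b by linarith
  moreover have "1 \<le> xr i (rmax i)" using rmax_xr_ge1[OF assms] by simp
  ultimately show ?thesis unfolding bb_def by linarith
qed

lemma bb_ge1: "1 \<le> i \<Longrightarrow> r \<le> rmax i \<Longrightarrow> 1 \<le> bb i r"
  using rmax_xr_ge1[of i r] unfolding bb_def by linarith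

lemma step2_eq:
  assumes i: "1 \<le> i" and r: "1 \<le> r" "r \<le> rmax i"
    and l: "i - bb i (r - 1) < l" "l \<le> i - bb i r"
  shows "step2 i l = r"
  unfolding step2_def
proof (rule Least_equality)
  show "1 \<le> r \<and> r \<le> rmax i \<and> l \<le> cidx i r" using r l by (simp add: cidx_eq)
next
  fix y assume y: "1 \<le> y \<and> y \<le> rmax i \<and> l \<le> cidx i y"
  show "r \<le> y"
  proof (rule ccontr)
    assume "\<not> r \<le> y"
    then have "y \<le> r - 1" by simp
    then have "bb i (r - 1) \<le> bb i y" by (rule bb_mono)
    then show False using y l bb_le[of i y] bb_le[of i "r-1"] unfolding cidx_eq by linarith
  qed
qed

lemma positions_eq:
  assumes i: "1 \<le> i" and r: "1 \<le> r" "r \<le> rmax i"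
  shows "positions_r i r = {i - bb i (r - 1) + 1 .. i - bb i r}"
proof (intro set_eqI iffI)
  fix l assume "l \<in> positions_r i r"
  then have l: "1 \<le> l" "l \<le> i - 1" "step2 i l = r" unfolding positions_r_def by auto
  have ex: "\<exists>r'. 1 \<le> r' \<and> r' \<le> rmax i \<and> l \<le> cidx i r'"
  proof (intro exI conjI)
    show "1 \<le> rmax i" using r by simp
    show "rmax i \<le> rmax i" by simp
    show "l \<le> cidx i (rmax i)" using l bb_rmax[OF i] by (simp add: cidx_eq)
  qed
  have P: "1 \<le> r \<and> r \<le> rmax i \<and> l \<le> cidx i r"
    using LeastI_ex[OF ex] l(3) unfolding step2_def by simp
  have lo: "i - bb i (r - 1) < l"
  proof (cases "r = 1")
    case True then show ?thesis using l bb_0[of i] by simp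
  next
    case False
    have "\<not> (1 \<le> r - 1 \<and> r - 1 \<le> rmax i \<and> l \<le> cidx i (r - 1))"
    proof
      assume "1 \<le> r - 1 \<and> r - 1 \<le> rmax i \<and> l \<le> cidx i (r - 1)"
      then have "step2 i l \<le> r - 1" unfolding step2_def by (rule Least_le)
      then show False using l(3) r by simp
    qed
    moreover have "1 \<le> r - 1" "r - 1 \<le> rmax i" using False r by auto
    ultimately show ?thesis by (auto simp add: cidx_eq not_le)
  qed
  show "l \<in> {i - bb i (r - 1) + 1 .. i - bb i r}" using P lo by (simp add: cidx_eq)
next
  fix l assume l: "l \<in> {i - bb i (r - 1) + 1 .. i - bb i r}"
  have "1 \<le> bb i r" using bb_ge1 i r by simp
  then have "1 \<le> l" "l \<le> i - 1" using l by auto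
  moreover have "step2 i l = r" using l by (intro step2_eq[OF i r]) auto
  ultimately show "l \<in> positions_r i r" unfolding positions_r_def by simp
qed


lemma gauss_sum: "a \<le> c \<Longrightarrow> (\<Sum>t\<in>{a..<c}. real t) = (real c * (real c - 1) - real a * (real a - 1)) / 2"
proof (induction c rule: dec_induct)
  case base then show ?case by simp
next
  case (step c)
  then show ?case by (simp add: field_simps)
qed

lemma real_choose2: "real (i choose 2) = real i * (real i - 1) / 2"
proof (cases i)
  case 0 then show ?thesis by simp
next
  case (Suc k)
  have "i choose 2 = i * (i - 1) div 2" by (rule choose_two)
  moreover have "even (i * (i - 1))" by auto
  ultimately have "real (i choose 2) = real (i * (i - 1)) / 2" by (simp add: real_of_nat_div)
  then show ?thesis using Suc by (simp add: of_nat_diff algebra_simps)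
qed

lemma sum_reindex_rev:
  fixes i b B :: nat
  assumes "b \<le> B" "B \<le> i" "1 \<le> b"
  shows "(\<Sum>l\<in>{i - B + 1 .. i - b}. f (i - l)) = (\<Sum>t\<in>{b..<B}. f t)"
  apply (rule sum.reindex_bij_witness[where i="\<lambda>t. i - t" and j="\<lambda>l. i - l"])
  subgoal for a
  proof -
    assume "a \<in> {i - B + 1..i - b}"
    then have "a \<le> i" by auto
    then show ?thesis by simp
  qed
  subgoal for a using assms by auto
  subgoal for a using assms by auto
  subgoal for a using assms by auto
  subgoal for a by simp
  done

lemma rhbs_real:
  assumes "1 \<le> n" "1 \<le> j" "j \<le> n"
  shows "real (rhbs (n - 1) j) = real (ceillog2 n) - (if j + n \<le> 2 ^ ceillog2 n then 1 else 0)"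
proof -
  have "j + n \<le> 2 ^ ceillog2 n \<Longrightarrow> 1 \<le> ceillog2 n"
  proof (rule ccontr)
    assume "j + n \<le> 2 ^ ceillog2 n" "\<not> 1 \<le> ceillog2 n"
    then have "ceillog2 n = 0" by simp
    then show False using \<open>j + n \<le> 2 ^ ceillog2 n\<close> assms by simp
  qed
  then show ?thesis using rhbs_closed[OF assms] by (auto simp: of_nat_diff)
qed

lemma num_sum:
  assumes bB: "1 \<le> b" "b < B"
  defines "n \<equiv> B - b"
  defines "K \<equiv> ceillog2 n"
  shows "(\<Sum>t\<in>{b..<B}. real t * real (rhbs (n - 1) (B - t)))
     = real K * (\<Sum>t\<in>{b..<B}. real t) - (\<Sum>t\<in>{B - (2^K - n)..<B}. real t)"
proof -
  have n1: "1 \<le> n" using bB unfolding n_def by simp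
  have up: "n \<le> 2^K" unfolding K_def by (rule le_two_power_ceillog2)
  have lo: "2^K < 2 * n" unfolding K_def using n1 by (intro two_power_ceillog2_gt) simp
  have "(\<Sum>t\<in>{b..<B}. real t * real (rhbs (n - 1) (B - t)))
      = (\<Sum>t\<in>{b..<B}. real K * real t - (if B - t + n \<le> 2^K then real t else 0))"
  proof (rule sum.cong)
    fix t assume t: "t \<in> {b..<B}"
    have "real (rhbs (n - 1) (B - t)) = real K - (if B - t + n \<le> 2^K then 1 else 0)"
      unfolding K_def using t n1 by (intro rhbs_real) (auto simp: n_def)
    then show "real t * real (rhbs (n - 1) (B - t)) = real K * real t - (if B - t + n \<le> 2^K then real t else 0)"
    proof (cases "B - t + n \<le> 2^K")
      case True
      then have h: "real (rhbs (n - 1) (B - t)) = real K - 1" using \<open>real (rhbs (n - 1) (B - t)) = _\<close> by simp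
      show ?thesis unfolding h using True by (simp add: algebra_simps)
    next
      case False
      then have h: "real (rhbs (n - 1) (B - t)) = real K" using \<open>real (rhbs (n - 1) (B - t)) = _\<close> by simp
      show ?thesis unfolding h using False by (simp add: algebra_simps)
    qed
  qed simp
  also have "\<dots> = real K * (\<Sum>t\<in>{b..<B}. real t) - (\<Sum>t\<in>{b..<B}. (if B - t + n \<le> 2^K then real t else 0))"
    by (simp add: sum_subtractf sum_distrib_left)
  also have "(\<Sum>t\<in>{b..<B}. (if B - t + n \<le> 2^K then real t else 0)) = (\<Sum>t\<in>{t\<in>{b..<B}. B - t + n \<le> 2^K}. real t)"
    by (rule sum.inter_filter[symmetric]) simp
  also have "{t\<in>{b..<B}. B - t + n \<le> 2^K} = {B - (2^K - n)..<B}"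
    using up lo unfolding n_def by auto
  finally show ?thesis .
qed

lemma kk_nat: assumes "1 \<le> n" shows "kk (real n) = int (ceillog2 n)"
proof -
  define K where "K = ceillog2 n"
  have up: "n \<le> 2^K" unfolding K_def by (rule le_two_power_ceillog2)
  have lo: "2^K < 2 * n" unfolding K_def using assms by (intro two_power_ceillog2_gt) simp
  have p: "(2::real) powr (real_of_int (int K)) = 2 ^ K" by (simp add: powr_realpow)
  have "(2::real) powr (real_of_int (int K) - 1) = 2 ^ K / 2" using p by (simp add: powr_diff)
  moreover have "(2::real) ^ K / 2 < real n" using lo by (simp add: field_simps) (metis of_nat_less_iff of_nat_mult of_nat_numeral of_nat_power)
  moreover have "real n \<le> (2::real) ^ K" using up by (metis of_nat_le_iff of_nat_numeral of_nat_power)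
  moreover have p2: "(2::real) powr (real K) = 2 ^ K" by (simp add: powr_realpow)
  ultimately show ?thesis unfolding K_def[symmetric] by (intro kk_unique) (simp_all add: p p2)
qed

lemma acal_algebra:
  fixes N D S Kv :: real
  assumes N: "N > 0" and D: "D > 0"
  shows "(Kv * (N * D / 2) - S * (N + D - S) / 2) / (N * D / 2)
      = (Kv + 1 - (N + S) / N) - N / D * (((N + S) / N - 1) * (2 - (N + S) / N))"
  using N D by (simp add: field_simps)

lemma acal_formula:
  assumes i: "4 \<le> i" and r: "1 \<le> r" "r \<le> rmax i" and nb: "bb i r < bb i (r - 1)"
  shows "PrR i r = (real (bb i (r-1)) * (real (bb i (r-1)) - 1) - real (bb i r) * (real (bb i r) - 1))
                   / (real i * (real i - 1))"
    and "Acal i r = uf (kk (real (bb i (r-1) - bb i r))) (real (bb i (r-1) - bb i r))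
           - real (bb i (r-1) - bb i r) / (real (bb i (r-1)) + real (bb i r) - 1)
             * vf (kk (real (bb i (r-1) - bb i r))) (real (bb i (r-1) - bb i r))"
proof -
  define B where "B = bb i (r - 1)"
  define b where "b = bb i r"
  define n where "n = B - b"
  define K where "K = ceillog2 n"
  define Cc where "Cc = real (i choose 2)"
  have i1: "1 \<le> i" using i by simp
  have b1: "1 \<le> b" unfolding b_def using bb_ge1[OF i1 r(2)] .
  have bB: "b < B" using nb unfolding B_def b_def .
  have Bi: "B \<le> i" unfolding B_def by (rule bb_le)
  have n1: "1 \<le> n" using bB unfolding n_def by simp
  have Cc: "Cc = real i * (real i - 1) / 2" unfolding Cc_def by (rule real_choose2)
  have Cc0: "Cc > 0" unfolding Cc using i by simp
  have pos: "positions_r i r = {i - B + 1 .. i - b}" unfolding B_def b_def by (rule positions_eq[OF i1 r])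
  have SA: "(\<Sum>t\<in>{b..<B}. real t) = (real B * (real B - 1) - real b * (real b - 1)) / 2"
    using bB by (intro gauss_sum) simp
  have PrR: "PrR i r = (\<Sum>t\<in>{b..<B}. real t) / Cc"
  proof -
    have "PrR i r = (\<Sum>l\<in>{i - B + 1 .. i - b}. (\<lambda>t. real t / Cc) (i - l))"
      unfolding PrR_def pos posprob_def Cc_def by simp
    also have "\<dots> = (\<Sum>t\<in>{b..<B}. real t / Cc)" using bB Bi b1 by (intro sum_reindex_rev) auto
    finally show ?thesis by (simp add: sum_divide_distrib)
  qed
  show "PrR i r = (real (bb i (r-1)) * (real (bb i (r-1)) - 1) - real (bb i r) * (real (bb i r) - 1))
                   / (real i * (real i - 1))"
  proof -
    have z: "real i * (real i - 1) \<noteq> 0" "real i * real i - real i \<noteq> 0" using i by auto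
    show ?thesis unfolding PrR SA Cc B_def[symmetric] b_def[symmetric] using z by (simp add: field_simps)
  qed
  have st3: "step3 i l = rhbs (n - 1) (B - (i - l))" if l: "l \<in> {i - B + 1 .. i - b}" for l
  proof -
    have "step2 i l = r" using l unfolding B_def b_def by (intro step2_eq[OF i1 r]) auto
    moreover have "cidx i (r - 1) = i - B" "cidx i r = i - b" unfolding B_def b_def cidx_eq by auto
    moreover have "i - b - (i - B) - 1 = n - 1" using Bi bB unfolding n_def by simp
    moreover have "l - (i - B) = B - (i - l)" using l Bi by auto
    ultimately show ?thesis unfolding step3_def Let_def by simp
  qed
  have NUM: "(\<Sum>l\<in>positions_r i r. posprob i l * real (step3 i l))
      = (\<Sum>t\<in>{b..<B}. real t * real (rhbs (n - 1) (B - t))) / Cc"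
  proof -
    have "(\<Sum>l\<in>positions_r i r. posprob i l * real (step3 i l))
        = (\<Sum>l\<in>{i - B + 1 .. i - b}. (\<lambda>t. real t / Cc * real (rhbs (n - 1) (B - t))) (i - l))"
      unfolding pos posprob_def Cc_def using st3 by (intro sum.cong) auto
    also have "\<dots> = (\<Sum>t\<in>{b..<B}. real t / Cc * real (rhbs (n - 1) (B - t)))"
      using bB Bi b1 by (intro sum_reindex_rev) auto
    finally show ?thesis by (simp add: sum_divide_distrib)
  qed
  have ns: "(\<Sum>t\<in>{b..<B}. real t * real (rhbs (n - 1) (B - t)))
     = real K * (\<Sum>t\<in>{b..<B}. real t) - (\<Sum>t\<in>{B - (2^K - n)..<B}. real t)"
    unfolding n_def K_def using b1 bB by (rule num_sum)
  have up: "n \<le> 2^K" unfolding K_def by (rule le_two_power_ceillog2)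
  have lo: "2^K < 2 * n" unfolding K_def using n1 by (intro two_power_ceillog2_gt) simp
  define S where "S = real (2^K - n)"
  have Sv: "S = 2^K - real n" unfolding S_def using up by (simp add: of_nat_diff)
  have SS: "(\<Sum>t\<in>{B - (2^K - n)..<B}. real t) = S * (real n + (real B + real b - 1) - S) / 2"
  proof -
    have le: "2^K - n \<le> B" using up lo bB unfolding n_def by simp
    have "(\<Sum>t\<in>{B - (2^K - n)..<B}. real t) = (real B * (real B - 1) - real (B - (2^K - n)) * (real (B - (2^K - n)) - 1)) / 2"
      by (intro gauss_sum) simp
    also have "real (B - (2^K - n)) = real B - S" unfolding S_def using le by (simp add: of_nat_diff)
    finally show ?thesis using bB unfolding n_def by (simp add: of_nat_diff algebra_simps)
  qed
  have SA2: "(\<Sum>t\<in>{b..<B}. real t) = real n * (real B + real b - 1) / 2"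
    unfolding SA n_def using bB by (simp add: of_nat_diff algebra_simps)
  have N0: "real n > 0" using n1 by simp
  have D0: "real B + real b - 1 > 0" using b1 bB by simp
  have kn: "kk (real n) = int K" unfolding K_def by (rule kk_nat[OF n1])
  have P: "(2::real) powr (real_of_int (kk (real n))) = real n + S" unfolding kn Sv
    by (simp add: powr_realpow)
  have "Acal i r = ((\<Sum>t\<in>{b..<B}. real t * real (rhbs (n - 1) (B - t))) / Cc) / ((\<Sum>t\<in>{b..<B}. real t) / Cc)"
    unfolding Acal_def NUM PrR ..
  also have "\<dots> = (\<Sum>t\<in>{b..<B}. real t * real (rhbs (n - 1) (B - t))) / (\<Sum>t\<in>{b..<B}. real t)"
    using Cc0 by simp
  also have "\<dots> = (real K * (real n * (real B + real b - 1) / 2) - S * (real n + (real B + real b - 1) - S) / 2)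
                    / (real n * (real B + real b - 1) / 2)"
    unfolding ns SS SA2 ..
  also have "\<dots> = (real K + 1 - (real n + S) / real n) - real n / (real B + real b - 1)
             * (((real n + S) / real n - 1) * (2 - (real n + S) / real n))"
    by (rule acal_algebra[OF N0 D0])
  also have "\<dots> = uf (kk (real n)) (real n) - real n / (real B + real b - 1) * vf (kk (real n)) (real n)"
    unfolding uf_def vf_def P using kn by simp
  finally show "Acal i r = uf (kk (real (bb i (r-1) - bb i r))) (real (bb i (r-1) - bb i r))
           - real (bb i (r-1) - bb i r) / (real (bb i (r-1)) + real (bb i r) - 1)
             * vf (kk (real (bb i (r-1) - bb i r))) (real (bb i (r-1) - bb i r))"
    unfolding n_def B_def b_def .
qed


lemma kk_le: assumes "0 < y" "y \<le> 2 powr (real_of_int m)" shows "kk y \<le> m"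
proof -
  have "2 powr (real_of_int (kk y) - 1) < y" using kk_bounds(1)[OF assms(1)] by simp
  then have "2 powr (real_of_int (kk y) - 1) < 2 powr (real_of_int m)" using assms by linarith
  then have "real_of_int (kk y) - 1 < real_of_int m" by simp
  then show ?thesis by linarith
qed

lemma kk_ge: assumes "0 < y" "2 powr (real_of_int m) < y" shows "m < kk y"
proof -
  have "2 powr (real_of_int m) < 2 powr (real_of_int (kk y))" using kk_bounds[OF assms(1)] assms by linarith
  then have "real_of_int m < real_of_int (kk y)" by simp
  then show ?thesis by linarith
qed

lemma mu0_eq: "mu0 = (sqrt 2 - 1) / (sqrt 2 + 1)"
proof -
  have "(3 - 2 * sqrt 2) * (sqrt 2 + 1) = sqrt 2 - 1" by (simp add: algebra_simps)
  moreover have "sqrt 2 + 1 > 0" using real_sqrt_ge_zero[of 2] by linarith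
  ultimately show ?thesis unfolding mu0_def by (simp add: field_simps)
qed

lemma core1:
  fixes x :: real and b B :: nat
  assumes x1: "1 \<le> x" and b: "real b \<le> x" "x < real b + 1"
    and B: "real B \<le> sqrt 2 * x" "sqrt 2 * x < real B + 1" and bB: "b < B"
  shows "\<bar>uf (kk (real (B - b))) (real (B - b)) - real (B - b) / (real B + real b - 1) * vf (kk (real (B - b))) (real (B - b))
          - FF ((sqrt 2 - 1) * x)\<bar> \<le> 80 / ((sqrt 2 - 1) * x)"
proof -
  define n where "n = real (B - b)"
  define w where "w = (sqrt 2 - 1) * x"
  define D where "D = real B + real b - 1"
  define S where "S = sqrt 2 * x + x"
  define \<mu> where "\<mu> = n / D"
  note s2 = s2b
  have b1: "1 \<le> b" using x1 b by linarith
  have nv: "n = real B - real b" unfolding n_def using bB by (simp add: of_nat_diff)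
  have n1: "1 \<le> n" using bB unfolding nv by simp
  have w0: "(2/5) \<le> w" unfolding w_def using mult_mono[of "2/5" "sqrt 2 - 1" 1 x] s2 x1 by simp
  have w0': "w > 0" using w0 by simp
  have nw: "\<bar>n - w\<bar> < 1" unfolding nv w_def using b B by (simp add: algebra_simps abs_less_iff)
  have D0: "D \<ge> n" unfolding D_def nv using b1 by simp
  have mu: "0 \<le> \<mu>" "\<mu> \<le> 1" unfolding \<mu>_def using D0 n1 by auto
  have ub: "real_of_int (kk n) - 1 < uf (kk n) n" "uf (kk n) n \<le> kk n" using uf_bounds n1 by auto
  have vb: "0 \<le> vf (kk n) n" "vf (kk n) n \<le> 1" using vf_bounds n1 by auto
  have mvb: "0 \<le> \<mu> * vf (kk n) n" "\<mu> * vf (kk n) n \<le> 1"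
    using mu vb by (auto intro: mult_le_one)
  have "\<bar>uf (kk n) n - \<mu> * vf (kk n) n - FF w\<bar> \<le> 80 / w"
  proof (cases "w < 8")
    case True
    have kn0: "0 \<le> kk n"
    proof -
      have "2 powr (real_of_int (-1)) < n" using n1 by simp
      then show ?thesis using kk_ge[of n "-1"] n1 by simp
    qed
    have kn4: "kk n \<le> 4"
    proof -
      have "n \<le> 2 powr (real_of_int 4)" using True nw by simp
      then show ?thesis using kk_le[of n 4] n1 by simp
    qed
    have kw: "-1 \<le> kk w" "kk w \<le> 3"
    proof -
      have "2 powr (real_of_int (-2)) < w" using w0 by (simp add: powr_minus)
      then show "-1 \<le> kk w" using kk_ge[of w "-2"] w0' by simp
      have "w \<le> 2 powr (real_of_int 3)" using True by simp
      then show "kk w \<le> 3" using kk_le[of w 3] w0' by simp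
    qed
    have "\<bar>FF w - kk w\<bar> \<le> 2" by (rule FF_kk[OF w0'])
    then have "\<bar>uf (kk n) n - \<mu> * vf (kk n) n - FF w\<bar> \<le> 9" using ub mvb kn0 kn4 kw by linarith
    also have "9 \<le> 80 / w" using True w0' by (simp add: field_simps)
    finally show ?thesis .
  next
    case False
    then have w8: "8 \<le> w" by simp
    have mn: "w / 2 \<le> min n w" using nw w8 by (simp add: min_def abs_less_iff)
    have mn0: "0 < min n w" using n1 w0' by simp
    have r1: "n \<le> 2 * w" "w \<le> 2 * n" using nw w8 by linarith+
    have "4 * \<bar>w - n\<bar> / min n w \<le> 4 * 1 / (w / 2)"
      using nw mn mn0 by (intro frac_le) (auto simp: abs_minus_commute)
    then have lipb: "4 * \<bar>w - n\<bar> / min n w \<le> 8 / w" by simp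
    have du: "\<bar>uf (kk n) n - uf (kk w) w\<bar> \<le> 8 / w"
      using uf_dlip[of n w] n1 w0' r1 lipb by linarith
    have dv: "\<bar>vf (kk n) n - vf (kk w) w\<bar> \<le> 8 / w"
      using vf_dlip[of n w] n1 w0' r1 lipb by linarith
    have S0: "S \<ge> w" unfolding S_def w_def using x1 by (simp add: algebra_simps)
    have m0: "mu0 = w / S"
    proof -
      have "w / S = ((sqrt 2 - 1) * x) / ((sqrt 2 + 1) * x)" unfolding w_def S_def by (simp add: algebra_simps)
      also have "\<dots> = (sqrt 2 - 1) / (sqrt 2 + 1)" using x1 by simp
      finally show ?thesis using mu0_eq by simp
    qed
    have DS: "S - 3 < D" "D \<le> S - 1" unfolding D_def S_def using b B by linarith+
    have Dpos: "D \<ge> S / 2" using DS S0 w8 by linarith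
    have D0': "D > 0" using Dpos S0 w8 by linarith
    have S0': "S > 0" using S0 w0' by linarith
    have dm: "\<bar>\<mu> - mu0\<bar> \<le> 8 / w"
    proof -
      have e: "\<mu> - mu0 = ((n - w) * S + w * (S - D)) / (D * S)"
        unfolding \<mu>_def m0 using D0' S0' by (simp add: field_simps)
      have "\<bar>(n - w) * S + w * (S - D)\<bar> \<le> \<bar>n - w\<bar> * S + w * \<bar>S - D\<bar>"
      proof -
        have "\<bar>(n - w) * S + w * (S - D)\<bar> \<le> \<bar>(n - w) * S\<bar> + \<bar>w * (S - D)\<bar>" by (rule abs_triangle_ineq)
        also have "\<dots> = \<bar>n - w\<bar> * S + w * \<bar>S - D\<bar>" using S0' w0' by (simp add: abs_mult)
        finally show ?thesis .
      qed
      also have "\<dots> \<le> 1 * S + w * 3"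
        using nw DS S0' w0' by (intro add_mono mult_mono) auto
      also have "\<dots> \<le> 4 * S" using S0 by simp
      also have "\<dots> \<le> 8 * D" using Dpos by simp
      finally have num: "\<bar>(n - w) * S + w * (S - D)\<bar> \<le> 8 * D" .
      have DSp: "D * S > 0" using D0' S0' by simp
      have "\<bar>\<mu> - mu0\<bar> = \<bar>(n - w) * S + w * (S - D)\<bar> / (D * S)" unfolding e abs_divide
        using abs_of_pos[OF DSp] by (simp only:)
      also have "\<dots> \<le> 8 * D / (D * S)" using num D0' S0' by (intro divide_right_mono) auto
      also have "\<dots> = 8 / S" using D0' S0' by (simp add: field_simps)
      also have "\<dots> \<le> 8 / w" using S0 w0' by (intro divide_left_mono) auto
      finally show ?thesis .
    qed
    have vwb: "0 \<le> vf (kk w) w" "vf (kk w) w \<le> 1" using vf_bounds w0' by auto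
    have eq: "uf (kk n) n - \<mu> * vf (kk n) n - FF w
        = (uf (kk n) n - uf (kk w) w) - \<mu> * (vf (kk n) n - vf (kk w) w) - vf (kk w) w * (\<mu> - mu0)"
      unfolding FF_def by (simp add: algebra_simps)
    have t2: "\<bar>\<mu> * (vf (kk n) n - vf (kk w) w)\<bar> \<le> 8 / w"
    proof -
      have "\<bar>\<mu> * (vf (kk n) n - vf (kk w) w)\<bar> \<le> 1 * (8 / w)"
        unfolding abs_mult using mu dv by (intro mult_mono) auto
      then show ?thesis by simp
    qed
    have t3: "\<bar>vf (kk w) w * (\<mu> - mu0)\<bar> \<le> 8 / w"
    proof -
      have "\<bar>vf (kk w) w * (\<mu> - mu0)\<bar> \<le> 1 * (8 / w)"
        unfolding abs_mult using vwb dm by (intro mult_mono) auto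
      then show ?thesis by simp
    qed
    have "\<bar>uf (kk n) n - \<mu> * vf (kk n) n - FF w\<bar> \<le> 8 / w + 8 / w + 8 / w"
      unfolding eq using du t2 t3 by linarith
    also have "\<dots> \<le> 80 / w" using w0' by (simp add: field_simps)
    finally show ?thesis .
  qed
  then show ?thesis unfolding n_def[symmetric] w_def[symmetric] \<mu>_def D_def by simp
qed


lemma part1:
  "\<exists>C. \<forall>i r. even i \<and> 4 \<le> i \<and> 1 \<le> r \<and> r \<le> rmax i \<and> PrR i r > 0 \<longrightarrow>
            \<bar>Acal i r - (real_of_int \<lceil>log 2 (wr i r)\<rceil> + 7 - 4 * sqrt 2
                 - (10 - 6 * sqrt 2) / px (wr i r) + (3 - 2 * sqrt 2) / (px (wr i r))\<^sup>2)\<bar>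
              \<le> C * 2 powr (real r / 2) / real i"
proof (intro exI allI impI)
  fix i r assume h: "even i \<and> 4 \<le> i \<and> 1 \<le> r \<and> r \<le> rmax i \<and> 0 < PrR i r"
  then have i: "4 \<le> i" and r: "1 \<le> r" "r \<le> rmax i" and P: "0 < PrR i r" by auto
  have i1: "1 \<le> i" using i by simp
  define x where "x = xr i r"
  define B where "B = bb i (r - 1)"
  define b where "b = bb i r"
  have bB: "b < B"
  proof (rule ccontr)
    assume "\<not> b < B"
    moreover have "b \<le> B" unfolding b_def B_def by (rule bb_mono) simp
    ultimately have "b = B" by simp
    then have "positions_r i r = {}" using positions_eq[OF i1 r] unfolding B_def b_def by auto
    then show False using P unfolding PrR_def by simp
  qed
  have x1: "1 \<le> x" unfolding x_def by (rule rmax_xr_ge1[OF i1 r(2)])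
  have xb: "real b \<le> x" "x < real b + 1" unfolding x_def b_def using bb_bounds by auto
  have xB: "real B \<le> sqrt 2 * x" "sqrt 2 * x < real B + 1"
    unfolding x_def B_def using bb_bounds[of i "r - 1"] xr_prev[OF r(1), of i] by auto
  have w: "wr i r = (sqrt 2 - 1) * x" unfolding wr_def x_def xr_def by simp
  have w0: "wr i r > 0" unfolding w using x1 by simp
  have A: "Acal i r = uf (kk (real (B - b))) (real (B - b)) - real (B - b) / (real B + real b - 1) * vf (kk (real (B - b))) (real (B - b))"
    unfolding B_def b_def by (rule acal_formula(2)[OF i r]) (use bB in \<open>simp add: B_def b_def\<close>)
  have "\<bar>Acal i r - FF (wr i r)\<bar> \<le> 80 / ((sqrt 2 - 1) * x)"
    unfolding A w by (rule core1[OF x1 xb xB bB])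
  also have "80 / ((sqrt 2 - 1) * x) \<le> 80 / ((2/5) * x)"
    using s2b x1 by (intro divide_left_mono mult_right_mono) auto
  also have "80 / ((2/5) * x) = 200 * 2 powr (real r / 2) / real i"
    unfolding x_def xr_def using i by (simp add: powr_minus field_simps)
  finally show "\<bar>Acal i r - (real_of_int \<lceil>log 2 (wr i r)\<rceil> + 7 - 4 * sqrt 2
                 - (10 - 6 * sqrt 2) / px (wr i r) + (3 - 2 * sqrt 2) / (px (wr i r))\<^sup>2)\<bar>
              \<le> 200 * 2 powr (real r / 2) / real i" unfolding FF_eq[OF w0] .
qed


definition GG :: "real \<Rightarrow> real" where "GG a = 1 - a - mu0 * ((a - 1) * (2 - a))"

lemma FF_scaled: assumes "1/2 < f" "f \<le> 1"
  shows "FF (f * 2 powr (real_of_int j)) = real_of_int j + GG (1 / f)"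
proof -
  have P0: "(2::real) powr (real_of_int j) > 0" by simp
  have k: "kk (f * 2 powr (real_of_int j)) = j"
  proof (rule kk_unique)
    show "2 powr (real_of_int j - 1) < f * 2 powr (real_of_int j)"
      using assms P0 by (simp add: powr_m1)
    show "f * 2 powr (real_of_int j) \<le> 2 powr (real_of_int j)" using assms P0 by simp
  qed
  have q: "2 powr (real_of_int j) / (f * 2 powr (real_of_int j)) = 1 / f" using P0 by simp
  show ?thesis unfolding FF_def uf_def vf_def GG_def k q by (simp add: algebra_simps)
qed

lemma GG_bound: assumes "1 \<le> a" "a \<le> 2" shows "\<bar>GG a\<bar> \<le> 2"
proof -
  have "0 \<le> (a - 1) * (2 - a)" using assms by simp
  moreover have "(a - 1) * (2 - a) \<le> 1 * 1" using assms by (intro mult_mono) auto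
  ultimately have "0 \<le> mu0 * ((a - 1) * (2 - a))" "mu0 * ((a - 1) * (2 - a)) \<le> 1"
    using mu0_bounds by (auto intro: mult_le_one)
  then show ?thesis unfolding GG_def using assms by linarith
qed

definition pii :: "nat \<Rightarrow> real" where "pii i = px (real i)"
definition ki :: "nat \<Rightarrow> int" where "ki i = kk (real i)"

lemma pii_bounds: assumes "1 \<le> i" shows "1/2 < pii i" "pii i \<le> 1"
proof -
  have "0 < real i" using assms by simp
  note kb = kk_bounds[OF this]
  have P0: "(2::real) powr (real_of_int (kk (real i))) > 0" by simp
  have e: "pii i = real i / 2 powr (real_of_int (kk (real i)))" unfolding pii_def px_def kk_def by simp
  show "1/2 < pii i" "pii i \<le> 1" unfolding e using kb P0 by (auto simp: powr_m1 field_simps)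
qed

lemma i_eq: "real i = pii i * 2 powr (real_of_int (ki i))"
  unfolding pii_def px_def ki_def kk_def by simp

lemma xr_even: "xr i (2 * m) = pii i * 2 powr (real_of_int (ki i - int m))"
proof -
  have "xr i (2 * m) = real i * 2 powr (- real m)" unfolding xr_def by simp
  also have "\<dots> = pii i * (2 powr (real_of_int (ki i)) * 2 powr (- real m))" by (subst i_eq) simp
  also have "2 powr (real_of_int (ki i)) * 2 powr (- real m) = 2 powr (real_of_int (ki i - int m))"
    by (simp add: powr_add[symmetric])
  finally show ?thesis .
qed

lemma xr_odd: "xr i (2 * m + 1) = sqrt 2 * (pii i * 2 powr (real_of_int (ki i - int m - 1)))"
proof -
  have e: "- real (2 * m + 1) / 2 = - real m - 1 + 1/2" by simp
  have "xr i (2 * m + 1) = real i * 2 powr (- real m - 1 + 1/2)" unfolding xr_def e ..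
  also have "\<dots> = real i * (2 powr (- real m - 1) * 2 powr (1/2))" by (subst powr_add) simp
  also have "\<dots> = pii i * (2 powr (real_of_int (ki i)) * 2 powr (- real m - 1)) * sqrt 2"
    by (subst i_eq) (simp add: powr_half_sqrt)
  also have "2 powr (real_of_int (ki i)) * 2 powr (- real m - 1) = 2 powr (real_of_int (ki i) + (- real m - 1))"
    by (simp add: powr_add)
  also have "\<dots> = 2 powr (real_of_int (ki i - int m - 1))" by (intro arg_cong[where f="(powr) 2"]) simp
  finally show ?thesis by simp
qed

definition ce :: "real \<Rightarrow> int" where "ce p = (if (sqrt 2 - 1) * p > 1/4 then 1 else 2)"
definition fe :: "real \<Rightarrow> real" where "fe p = (if (sqrt 2 - 1) * p > 1/4 then 2 * (sqrt 2 - 1) * p else 4 * (sqrt 2 - 1) * p)"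
definition co :: "real \<Rightarrow> int" where "co p = (if (2 - sqrt 2) * p > 1/2 then 0 else 1)"
definition fo :: "real \<Rightarrow> real" where "fo p = (if (2 - sqrt 2) * p > 1/2 then (2 - sqrt 2) * p else 2 * (2 - sqrt 2) * p)"

lemma sp_bounds: assumes "1/2 < p" "p \<le> 1"
  shows "sqrt 2 * p \<le> 17/12 * p" "7/5 * p \<le> sqrt 2 * p" "sqrt 2 * p \<le> 17/12"
proof -
  show "sqrt 2 * p \<le> 17/12 * p" using s2b assms by (intro mult_right_mono) auto
  show "7/5 * p \<le> sqrt 2 * p" using s2b assms by (intro mult_right_mono) auto
  show "sqrt 2 * p \<le> 17/12" using s2b assms mult_mono[of "sqrt 2" "17/12" p 1] by auto
qed

lemma fe_bounds: assumes "1/2 < p" "p \<le> 1" shows "1/2 < fe p" "fe p \<le> 1"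
proof -
  define t where "t = sqrt 2 * p"
  have tb: "t \<le> 17/12 * p" "7/5 * p \<le> t" "t \<le> 17/12" using sp_bounds[OF assms] unfolding t_def by auto
  have e: "fe p = (if t - p > 1/4 then 2 * (t - p) else 4 * (t - p))" unfolding fe_def t_def by (simp add: algebra_simps)
  show "1/2 < fe p" "fe p \<le> 1" unfolding e using tb assms by auto
qed

lemma fo_bounds: assumes "1/2 < p" "p \<le> 1" shows "1/2 < fo p" "fo p \<le> 1"
proof -
  define t where "t = sqrt 2 * p"
  have tb: "t \<le> 17/12 * p" "7/5 * p \<le> t" "t \<le> 17/12" using sp_bounds[OF assms] unfolding t_def by auto
  have e: "fo p = (if 2 * p - t > 1/2 then 2 * p - t else 2 * (2 * p - t))" unfolding fo_def t_def by (simp add: algebra_simps)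
  show "1/2 < fo p" "fo p \<le> 1" unfolding e using tb assms by auto
qed

lemma fe_eq: "(sqrt 2 - 1) * p * 2 powr (real_of_int j) = fe p * 2 powr (real_of_int (j - ce p))"
  unfolding fe_def ce_def by (auto simp: powr_diff)

lemma fo_eq: "(2 - sqrt 2) * p * 2 powr (real_of_int j) = fo p * 2 powr (real_of_int (j - co p))"
  unfolding fo_def co_def by (auto simp: powr_diff)

definition he :: "real \<Rightarrow> real" where "he p = - real_of_int (ce p) + GG (1 / fe p)"
definition ho :: "real \<Rightarrow> real" where "ho p = - real_of_int (co p) + GG (1 / fo p)"

lemma wr_xr: "wr i r = (sqrt 2 - 1) * xr i r" unfolding wr_def xr_def by simp

lemma FF_wr: assumes "1 \<le> i"
  shows "FF (wr i r) = real_of_int (ki i) - real ((r + 1) div 2) + (if even r then he (pii i) else ho (pii i))"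
proof (cases "even r")
  case True
  then obtain m where m: "r = 2 * m" by (auto elim: evenE)
  have w: "wr i r = fe (pii i) * 2 powr (real_of_int (ki i - int m - ce (pii i)))"
    unfolding wr_xr m xr_even using fe_eq[of "pii i" "ki i - int m"] by (simp add: mult.assoc)
  have h: "FF (fe (pii i) * 2 powr (real_of_int (ki i - int m - ce (pii i)))) = real_of_int (ki i - int m - ce (pii i)) + GG (1 / fe (pii i))"
    by (rule FF_scaled[OF fe_bounds[OF pii_bounds[OF assms]]])
  have "FF (wr i r) = real_of_int (ki i - int m - ce (pii i)) + GG (1 / fe (pii i))"
    by (simp only: w h)
  moreover have "(r + 1) div 2 = m" unfolding m by simp
  ultimately show ?thesis using True unfolding he_def by simp
next
  case False
  then obtain m where m: "r = 2 * m + 1" by (auto elim: oddE)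
  have "wr i r = (2 - sqrt 2) * pii i * 2 powr (real_of_int (ki i - int m - 1))"
    unfolding wr_xr m xr_odd by (simp add: algebra_simps)
  also have "\<dots> = fo (pii i) * 2 powr (real_of_int (ki i - int m - 1 - co (pii i)))" by (rule fo_eq)
  finally have w: "wr i r = fo (pii i) * 2 powr (real_of_int (ki i - int m - 1 - co (pii i)))" .
  have h: "FF (fo (pii i) * 2 powr (real_of_int (ki i - int m - 1 - co (pii i)))) = real_of_int (ki i - int m - 1 - co (pii i)) + GG (1 / fo (pii i))"
    by (rule FF_scaled[OF fo_bounds[OF pii_bounds[OF assms]]])
  have "FF (wr i r) = real_of_int (ki i - int m - 1 - co (pii i)) + GG (1 / fo (pii i))"
    by (simp only: w h)
  moreover have "(r + 1) div 2 = m + 1" unfolding m by simp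
  ultimately show ?thesis using False unfolding ho_def by simp
qed

lemma S_even:
  fixes k he' ho' :: real
  defines "L \<equiv> k + (2 * ho' + he') / 3 - 4 / 3"
  shows "(\<Sum>r\<in>{1..2*M}. (1/2)^r * (k - real ((r + 1) div 2) + (if even r then he' else ho')))
     = L - (1/4)^M * (L - real M)"
proof (induction M)
  case 0 then show ?case by simp
next
  case (Suc M)
  have e: "{1..2 * Suc M} = insert (2*M+2) (insert (2*M+1) {1..2*M})" by auto
  have p1: "(1/2::real)^(2*M+1) = (1/4)^M / 2" by (simp add: power_mult power_add power2_eq_square)
  have p2: "(1/2::real)^(2*M+2) = (1/4)^M / 4" by (simp add: power_mult power_add power2_eq_square)
  have d1: "(2*M+1+1) div 2 = M + 1" by simp
  have d2: "(2*M+2+1) div 2 = M + 1" by simp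
  have "(\<Sum>r\<in>{1..2*Suc M}. (1/2)^r * (k - real ((r + 1) div 2) + (if even r then he' else ho')))
     = (1/2)^(2*M+2) * (k - real (M + 1) + he') + ((1/2)^(2*M+1) * (k - real (M+1) + ho')
        + (\<Sum>r\<in>{1..2*M}. (1/2)^r * (k - real ((r + 1) div 2) + (if even r then he' else ho'))))"
    unfolding e by (simp add: d1 d2 del: power_Suc)
  also have "\<dots> = L - (1/4)^(Suc M) * (L - real (Suc M))"
    unfolding Suc p1 p2 L_def by (simp add: field_simps)
  finally show ?case .
qed


lemma s2sq: "sqrt 2 * sqrt 2 = (2::real)" by simp

lemma Tcal_eq: assumes i: "1 \<le> i"
  shows "Tcal i = (2 * ho (pii i) + he (pii i)) / 3 - 4 / 3"
proof -
  define p where "p = pii i"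
  define s where "s = sqrt (2::real)"
  have pb: "1/2 < p" "p \<le> 1" using pii_bounds[OF i] unfolding p_def by auto
  have s: "s * s = 2" "7/5 < s" "s < 17/12" unfolding s_def using s2b by auto
  have T: "Tcal i = 5 - 4 * s - 1 / p + 1 / (6 * p\<^sup>2) +
     (if p \<le> (1 + s) / 4 then - 1 / (6 * p) - 1 / (16 * p\<^sup>2) - 2 / 3
      else if p \<le> (2 + s) / 4 then - s / (3 * p) - 1 / 3
      else - 4 / (3 * p) + 1 / (4 * p\<^sup>2) + 1 / 3)"
    unfolding Tcal_def Let_def p_def pii_def s_def ..
  have c1: "(p \<le> (1 + s) / 4) = ((s - 1) * p \<le> 1/4)"
  proof -
    have "(s - 1) * ((1 + s) / 4) = 1/4" using s by (simp add: algebra_simps)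
    moreover have "(p \<le> (1 + s) / 4) = ((s - 1) * p \<le> (s - 1) * ((1 + s) / 4))" using s by simp
    ultimately show ?thesis by simp
  qed
  have c2: "(p \<le> (2 + s) / 4) = ((2 - s) * p \<le> 1/2)"
  proof -
    have "(2 - s) * ((2 + s) / 4) = 1/2" using s by (simp add: algebra_simps)
    moreover have "(p \<le> (2 + s) / 4) = ((2 - s) * p \<le> (2 - s) * ((2 + s) / 4))" using s by simp
    ultimately show ?thesis by simp
  qed
  have p0: "p \<noteq> 0" using pb by simp
  have G: "GG a = 1 - a - (3 - 2 * s) * ((a - 1) * (2 - a))" for a unfolding GG_def mu0_def s_def ..
  have inv1: "1 / (4 * (s - 1) * p) = (s + 1) / (4 * p)" "1 / (2 * (s - 1) * p) = (s + 1) / (2 * p)"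
    "1 / ((2 - s) * p) = (2 + s) / (2 * p)" "1 / (2 * (2 - s) * p) = (2 + s) / (4 * p)"
    using s p0 by (simp_all add: field_simps)
  show ?thesis
  proof (cases "(s - 1) * p \<le> 1/4")
    case A: True
    then have "p \<le> (1 + s) / 4" using c1 by simp
    then have "p \<le> 29/48" using s by simp
    then have "(2 - s) * p \<le> (3/5) * (29/48)" using s pb by (intro mult_mono) auto
    then have B: "(2 - s) * p \<le> 1/2" by simp
    have e: "he p = -2 + GG ((s + 1) / (4 * p))" "ho p = -1 + GG ((2 + s) / (4 * p))"
      unfolding he_def ho_def ce_def fe_def co_def fo_def s_def[symmetric] using A B inv1 by auto
    show ?thesis unfolding T p_def[symmetric] e G using A c1 s p0 by (simp add: field_simps power2_eq_square)
  next
    case A: False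
    show ?thesis
    proof (cases "(2 - s) * p \<le> 1/2")
      case B: True
      have e: "he p = -1 + GG ((s + 1) / (2 * p))" "ho p = -1 + GG ((2 + s) / (4 * p))"
        unfolding he_def ho_def ce_def fe_def co_def fo_def s_def[symmetric] using A B inv1 by auto
      show ?thesis unfolding T p_def[symmetric] e G using A B c1 c2 s p0 by (simp add: field_simps power2_eq_square)
    next
      case B: False
      have e: "he p = -1 + GG ((s + 1) / (2 * p))" "ho p = 0 + GG ((2 + s) / (2 * p))"
        unfolding he_def ho_def ce_def fe_def co_def fo_def s_def[symmetric] using A B inv1 by auto
      show ?thesis unfolding T p_def[symmetric] e G using A B c1 c2 s p0 by (simp add: field_simps power2_eq_square)
    qed
  qed
qed


definition tau :: "nat \<Rightarrow> nat \<Rightarrow> real" where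
  "tau i r = real (bb i r) * (real (bb i r) - 1) / (real i * (real i - 1))"

lemma tau0: "2 \<le> i \<Longrightarrow> tau i 0 = 1"
  unfolding tau_def bb_0 by simp

lemma PrR_nonneg: "0 \<le> PrR i r"
  unfolding PrR_def posprob_def by (intro sum_nonneg) auto

lemma PrR_tau: assumes i: "4 \<le> i" and r: "1 \<le> r" "r \<le> rmax i"
  shows "PrR i r = tau i (r - 1) - tau i r"
proof (cases "bb i r < bb i (r - 1)")
  case True
  show ?thesis unfolding acal_formula(1)[OF i r True] tau_def by (simp add: diff_divide_distrib)
next
  case False
  moreover have "bb i r \<le> bb i (r - 1)" by (rule bb_mono) simp
  ultimately have e: "bb i r = bb i (r - 1)" by simp
  have "positions_r i r = {}" using positions_eq[of i r] i r e by auto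
  then show ?thesis unfolding PrR_def tau_def e by simp
qed

lemma bbsq_bounds: "real (bb i r) * (real (bb i r) - 1) \<le> (xr i r)^2"
  "(xr i r)^2 - 3 * xr i r \<le> real (bb i r) * (real (bb i r) - 1)"
proof -
  define x where "x = xr i r"
  define b where "b = real (bb i r)"
  have hb: "b \<le> x" "x < b + 1" "0 \<le> b" unfolding x_def b_def using bb_bounds by auto
  have "b * (b - 1) \<le> b * b" using hb by (simp add: right_diff_distrib)
  also have "\<dots> \<le> x * x" using hb by (intro mult_mono) auto
  finally show "real (bb i r) * (real (bb i r) - 1) \<le> (xr i r)^2"
    unfolding x_def[symmetric] b_def[symmetric] by (simp add: power2_eq_square)
  define d where "d = x - b"
  have d: "0 \<le> d" "d < 1" unfolding d_def using hb by auto
  have "b * (b - 1) - (x^2 - 3 * x) = 2 * x * (1 - d) + d^2 + d"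
    unfolding d_def by (simp add: algebra_simps power2_eq_square)
  moreover have "0 \<le> 2 * x * (1 - d) + d^2 + d" using d hb by simp
  ultimately show "(xr i r)^2 - 3 * xr i r \<le> real (bb i r) * (real (bb i r) - 1)"
    unfolding x_def[symmetric] b_def[symmetric] by simp
qed

lemma powr_half_pow: "(2::real) powr (- real r / 2) = (inverse (sqrt 2)) ^ r"
proof -
  have "(2::real) powr (- real r / 2) = (2 powr (- 1 / 2)) powr (real r)" by (simp add: powr_powr)
  also have "\<dots> = (2 powr (- 1 / 2)) ^ r" by (simp add: powr_realpow)
  also have "(2::real) powr (- 1 / 2) = inverse (sqrt 2)" by (simp add: powr_minus powr_half_sqrt)
  finally show ?thesis .
qed

lemma xr_sq: "(xr i r)^2 = (real i)^2 * (1/2)^r"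
proof -
  have "(inverse (sqrt 2) ^ r)^2 = ((inverse (sqrt (2::real)))^2)^r"
    by (simp only: power_mult[symmetric] mult.commute)
  also have "(inverse (sqrt (2::real)))^2 = 1/2" by (simp add: power_inverse)
  finally have "(inverse (sqrt 2) ^ r)^2 = ((1::real)/2)^r" .
  then show ?thesis unfolding xr_def powr_half_pow by (simp add: power_mult_distrib)
qed

lemma delta_bound: assumes i: "4 \<le> i"
  shows "\<bar>tau i r - (1/2)^r\<bar> \<le> 3 * xr i r / (real i * (real i - 1))"
proof -
  define x where "x = xr i r"
  define T where "T = real (bb i r) * (real (bb i r) - 1)"
  define Q where "Q = real i * (real i - 1)"
  have Q0: "Q > 0" unfolding Q_def using i by simp
  have i0: "real i > 0" using i by simp
  have x0: "0 \<le> x" "x \<le> real i" unfolding x_def using xr_nonneg xr_le by auto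
  have T: "x^2 - 3 * x \<le> T" "T \<le> x^2" unfolding x_def T_def using bbsq_bounds by auto
  have h: "(1/2)^r = x^2 / (real i)^2" unfolding x_def xr_sq using i0 by simp
  have i1: "real i - 1 \<noteq> 0" using i by simp
  have hx1: "x^2 - x^2 / real i = x^2 * (real i - 1) / real i" using i0 by (simp add: field_simps)
  have hx2: "(a * (real i - 1) / real i) / (real i * (real i - 1)) = a / (real i)^2" for a
    using i0 i1 by (simp add: field_simps power2_eq_square)
  have hx: "x^2 / Q - (x^2 / real i) / Q = x^2 / (real i)^2"
    unfolding diff_divide_distrib[symmetric] hx1 Q_def hx2 ..
  have eq: "tau i r - (1/2)^r = (T - x^2) / Q + (x^2 / real i) / Q"
    unfolding tau_def T_def[symmetric] Q_def[symmetric] h hx[symmetric] by (simp add: diff_divide_distrib)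
  have "-3 * x \<le> T - x^2" using T by linarith
  then have a1: "-3 * x / Q \<le> (T - x^2) / Q" using Q0 by (intro divide_right_mono) auto
  have a1': "(T - x^2) / Q \<le> 0" using T Q0 by (simp add: divide_nonpos_pos)
  have "x^2 / real i \<le> x" using x0 i0 by (simp add: power2_eq_square field_simps mult_left_mono)
  then have a2b: "(x^2 / real i) / Q \<le> x / Q" using Q0 by (intro divide_right_mono) auto
  have a2a: "0 \<le> (x^2 / real i) / Q" using Q0 i0 by simp
  note a2 = a2a a2b
  have xq: "0 \<le> x / Q" using x0 Q0 by simp
  have e3: "3 * x / Q = 3 * (x / Q)" "-3 * x / Q = - (3 * (x / Q))" by simp_all
  have "\<bar>tau i r - (1/2)^r\<bar> \<le> 3 * x / Q" unfolding eq abs_le_iff using a1 a1' a2 xq e3 by linarith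
  then show ?thesis unfolding x_def Q_def .
qed

lemma abel: "(\<Sum>r\<in>{1..R}. (d (r - 1) - d r) * f r) = d 0 * f 1 - d R * f (R + 1) + (\<Sum>r\<in>{1..R}. d r * (f (r + 1) - f r))"
  for d f :: "nat \<Rightarrow> real"
proof (induction R)
  case 0 then show ?case by simp
next
  case (Suc R) then show ?case by (simp add: algebra_simps)
qed

lemma geom_bound: fixes q :: real assumes "0 \<le> q" "q < 1" shows "(\<Sum>r\<in>{1..R}. q ^ r) \<le> q / (1 - q)"
proof -
  have "(\<Sum>r\<in>{1..R}. q ^ r) * (1 - q) = q - q ^ (R + 1)"
  proof (induction R)
    case 0 then show ?case by simp
  next
    case (Suc R)
    have "(\<Sum>r\<in>{1..Suc R}. q ^ r) = q ^ Suc R + (\<Sum>r\<in>{1..R}. q ^ r)" by simp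
    then have "(\<Sum>r\<in>{1..Suc R}. q ^ r) * (1 - q) = q ^ Suc R * (1 - q) + (\<Sum>r\<in>{1..R}. q ^ r) * (1 - q)"
      by (simp add: distrib_right)
    also have "\<dots> = q - q ^ (Suc R + 1)" unfolding Suc by (simp add: algebra_simps)
    finally show ?case .
  qed
  then have "(\<Sum>r\<in>{1..R}. q ^ r) * (1 - q) \<le> q" using assms by simp
  then show ?thesis using assms by (simp add: field_simps)
qed

lemma xr_sum: "(\<Sum>r\<in>{1..R}. xr i r) \<le> 3 * real i"
proof -
  define q where "q = inverse (sqrt (2::real))"
  have q: "0 \<le> q" "q < 1" unfolding q_def using s2b by (auto simp: inverse_less_1_iff)
  have "(\<Sum>r\<in>{1..R}. xr i r) = real i * (\<Sum>r\<in>{1..R}. q ^ r)"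
    unfolding xr_def powr_half_pow q_def by (simp add: sum_distrib_left)
  also have "\<dots> \<le> real i * (q / (1 - q))" using geom_bound[OF q] by (intro mult_left_mono) auto
  also have "q / (1 - q) \<le> 3"
  proof -
    have "q \<le> 3/4" unfolding q_def using s2b by (simp add: field_simps)
    then show ?thesis using q by (simp add: field_simps)
  qed
  then have "real i * (q / (1 - q)) \<le> real i * 3" by (intro mult_left_mono) auto
  finally show ?thesis by simp
qed


lemma FF_step: assumes w: "w > 0" shows "\<bar>FF (w / sqrt 2) - FF w\<bar> \<le> 5"
proof -
  have w2: "w / sqrt 2 > 0" using w by simp
  have a: "w / sqrt 2 \<le> w" using w s2b by (simp add: field_simps)
  have b: "w / 2 < w / sqrt 2" using w s2b by (simp add: field_simps)
  have k1: "kk (w / sqrt 2) \<le> kk w"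
    using kk_le[OF w2, of "kk w"] kk_bounds(2)[OF w] a by simp
  have "2 powr (real_of_int (kk w) - 1) < w" using kk_bounds(1)[OF w] by simp
  then have h1: "2 powr (real_of_int (kk w - 2)) < w / 2" by (simp add: powr_diff)
  have h: "2 powr (real_of_int (kk w - 2)) < w / sqrt 2" using h1 b by linarith
  have "kk w - 2 < kk (w / sqrt 2)" by (rule kk_ge[OF w2 h])
  moreover have "\<bar>FF (w / sqrt 2) - kk (w / sqrt 2)\<bar> \<le> 2" "\<bar>FF w - kk w\<bar> \<le> 2"
    using FF_kk w w2 by auto
  ultimately show ?thesis using k1 by linarith
qed

lemma wr_succ: "wr i (Suc r) = wr i r / sqrt 2"
  unfolding wr_xr using xr_prev[of "Suc r" i] by simp

lemma FF_last: assumes i: "1 \<le> i" shows "\<bar>FF (wr i (Suc (rmax i)))\<bar> \<le> 3"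
proof -
  define x where "x = xr i (rmax i)"
  have x: "1 \<le> x" "x < sqrt 2" unfolding x_def using rmax_xr_ge1[OF i] rmax_xr_lt[OF i] by auto
  define w where "w = wr i (Suc (rmax i))"
  have we: "w = (sqrt 2 - 1) * x / sqrt 2" by (simp only: w_def wr_succ) (simp add: wr_xr x_def)
  have w0: "1/4 < w"
  proof -
    have "(sqrt 2 - 1) / sqrt 2 \<le> (sqrt 2 - 1) * x / sqrt 2" using x s2b by (simp add: divide_right_mono)
    moreover have "1/4 < (sqrt 2 - 1) / sqrt 2" using s2b by (simp add: field_simps)
    ultimately show ?thesis unfolding we by linarith
  qed
  have w1: "w \<le> 1"
  proof -
    have "(sqrt 2 - 1) * x \<le> (sqrt 2 - 1) * sqrt 2" using x s2b by (intro mult_left_mono) auto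
    then have "w \<le> (sqrt 2 - 1) * sqrt 2 / sqrt 2" unfolding we by (intro divide_right_mono) auto
    then show ?thesis using s2b by simp
  qed
  have wp: "w > 0" using w0 by simp
  have "kk w \<le> 0" using kk_le[OF wp, of 0] w1 by simp
  moreover have "-2 < kk w" using kk_ge[OF wp, of "-2"] w0 by (simp add: powr_minus)
  moreover have "\<bar>FF w - kk w\<bar> \<le> 2" using FF_kk[OF wp] .
  ultimately show ?thesis unfolding w_def[symmetric] by linarith
qed

lemma part1_expl:
  assumes i: "4 \<le> i" and r: "1 \<le> r" "r \<le> rmax i" and P: "0 < PrR i r"
  shows "\<bar>Acal i r - FF (wr i r)\<bar> \<le> 200 / xr i r"
proof -
  have i1: "1 \<le> i" using i by simp
  define x where "x = xr i r"
  define B where "B = bb i (r - 1)"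
  define b where "b = bb i r"
  have bB: "b < B"
  proof (rule ccontr)
    assume "\<not> b < B"
    moreover have "b \<le> B" unfolding b_def B_def by (rule bb_mono) simp
    ultimately have "b = B" by simp
    then have "positions_r i r = {}" using positions_eq[OF i1 r] unfolding B_def b_def by auto
    then show False using P unfolding PrR_def by simp
  qed
  have x1: "1 \<le> x" unfolding x_def by (rule rmax_xr_ge1[OF i1 r(2)])
  have xb: "real b \<le> x" "x < real b + 1" unfolding x_def b_def using bb_bounds by auto
  have xB: "real B \<le> sqrt 2 * x" "sqrt 2 * x < real B + 1"
    unfolding x_def B_def using bb_bounds[of i "r - 1"] xr_prev[OF r(1), of i] by auto
  have w: "wr i r = (sqrt 2 - 1) * x" unfolding wr_def x_def xr_def by simp
  have A: "Acal i r = uf (kk (real (B - b))) (real (B - b)) - real (B - b) / (real B + real b - 1) * vf (kk (real (B - b))) (real (B - b))"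
    unfolding B_def b_def by (rule acal_formula(2)[OF i r]) (use bB in \<open>simp add: B_def b_def\<close>)
  have "\<bar>Acal i r - FF (wr i r)\<bar> \<le> 80 / ((sqrt 2 - 1) * x)"
    unfolding A w by (rule core1[OF x1 xb xB bB])
  also have "80 / ((sqrt 2 - 1) * x) \<le> 80 / ((2/5) * x)"
    using s2b x1 by (intro divide_left_mono mult_right_mono) auto
  also have "80 / ((2/5) * x) = 200 / x" by simp
  finally show ?thesis unfolding x_def .
qed

lemma PrR_upper: assumes i: "4 \<le> i" and r: "1 \<le> r" "r \<le> rmax i"
  shows "PrR i r \<le> ((xr i r)^2 + 3 * xr i r) / (real i * (real i - 1))"
proof -
  define Q where "Q = real i * (real i - 1)"
  have Q0: "Q > 0" unfolding Q_def using i by simp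
  have u: "real (bb i (r-1)) * (real (bb i (r-1)) - 1) \<le> 2 * (xr i r)^2"
    using bbsq_bounds(1)[of i "r-1"] xr_prev[OF r(1), of i] by (simp add: power_mult_distrib)
  have l: "(xr i r)^2 - 3 * xr i r \<le> real (bb i r) * (real (bb i r) - 1)" by (rule bbsq_bounds(2))
  have "PrR i r = (real (bb i (r-1)) * (real (bb i (r-1)) - 1) - real (bb i r) * (real (bb i r) - 1)) / Q"
    unfolding PrR_tau[OF i r] tau_def Q_def by (simp add: diff_divide_distrib)
  also have "\<dots> \<le> ((xr i r)^2 + 3 * xr i r) / Q" using u l Q0 by (intro divide_right_mono) auto
  finally show ?thesis unfolding Q_def .
qed

lemma E1_term: assumes i: "4 \<le> i" and r: "1 \<le> r" "r \<le> rmax i"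
  shows "\<bar>PrR i r * Acal i r - PrR i r * FF (wr i r)\<bar> \<le> 200 * (xr i r + 3) / (real i * (real i - 1))"
proof (cases "PrR i r = 0")
  case True then show ?thesis using i xr_nonneg[of i r] by simp
next
  case False
  then have P: "PrR i r > 0" using PrR_nonneg[of i r] by simp
  define x where "x = xr i r"
  define Q where "Q = real i * (real i - 1)"
  have Q0: "Q > 0" unfolding Q_def using i by simp
  have x1: "1 \<le> x" unfolding x_def by (rule rmax_xr_ge1) (use i r in auto)
  have "\<bar>PrR i r * Acal i r - PrR i r * FF (wr i r)\<bar> = PrR i r * \<bar>Acal i r - FF (wr i r)\<bar>"
    using P by (simp add: abs_mult right_diff_distrib[symmetric])
  also have "\<dots> \<le> ((x^2 + 3 * x) / Q) * (200 / x)"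
    using PrR_upper[OF i r] part1_expl[OF i r P] P unfolding x_def Q_def
    by (intro mult_mono) auto
  also have "\<dots> = 200 * (x + 3) / Q" using x1 Q0 by (simp add: field_simps power2_eq_square)
  finally show ?thesis unfolding x_def Q_def .
qed


lemma log_le_self: assumes "1 \<le> i" shows "log 2 (real i) \<le> real i"
proof -
  have "i < 2 ^ i" by (rule less_exp)
  then have "real i \<le> 2 powr (real i)" by (simp add: powr_realpow)
  then show ?thesis using log_le_iff[of 2 "real i" "real i"] assms by simp
qed

lemma rmax_le: assumes "1 \<le> i" shows "real (rmax i) \<le> 2 * real i"
proof -
  have h: "0 \<le> 2 * log 2 (real i)" using assms by simp
  have "real (rmax i) \<le> 2 * log 2 (real i)" unfolding rmax_def using h by (simp add: of_nat_nat)
  then show ?thesis using log_le_self[OF assms] by linarith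
qed

lemma ki_bounds: assumes "1 \<le> i" shows "0 \<le> ki i" "ki i \<le> int i"
proof -
  have ip: "real i > 0" using assms by simp
  have "2 powr (real_of_int (-1)) < real i" using assms by (simp add: powr_minus)
  then show "0 \<le> ki i" unfolding ki_def using kk_ge[OF ip, of "-1"] by simp
  have "i < 2 ^ i" by (rule less_exp)
  then have "real i \<le> 2 powr (real_of_int (int i))" by (simp add: powr_realpow)
  then show "ki i \<le> int i" unfolding ki_def using kk_le[OF ip] by simp
qed

lemma half_R: assumes "1 \<le> i" shows "(1/2::real) ^ rmax i \<le> 2 / (real i)^2"
proof -
  have "(xr i (rmax i))^2 < (sqrt 2)^2"
    using rmax_xr_lt[OF assms] xr_nonneg[of i "rmax i"] by (intro power_strict_mono) auto
  then have "(real i)^2 * (1/2)^rmax i < 2" unfolding xr_sq by simp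
  moreover have "(real i)^2 > 0" using assms by simp
  ultimately show ?thesis by (simp add: field_simps)
qed

lemma he_bound: assumes "1/2 < p" "p \<le> 1" shows "\<bar>he p\<bar> \<le> 4"
proof -
  have f: "1/2 < fe p" "fe p \<le> 1" using fe_bounds[OF assms] by auto
  have "1 \<le> 1 / fe p" "1 / fe p \<le> 2" using f by (auto simp: field_simps)
  then have "\<bar>GG (1 / fe p)\<bar> \<le> 2" by (rule GG_bound)
  moreover have "\<bar>real_of_int (ce p)\<bar> \<le> 2" unfolding ce_def by auto
  ultimately show ?thesis unfolding he_def by linarith
qed

lemma ho_bound: assumes "1/2 < p" "p \<le> 1" shows "\<bar>ho p\<bar> \<le> 4"
proof -
  have f: "1/2 < fo p" "fo p \<le> 1" using fo_bounds[OF assms] by auto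
  have "1 \<le> 1 / fo p" "1 / fo p \<le> 2" using f by (auto simp: field_simps)
  then have "\<bar>GG (1 / fo p)\<bar> \<le> 2" by (rule GG_bound)
  moreover have "\<bar>real_of_int (co p)\<bar> \<le> 2" unfolding co_def by auto
  ultimately show ?thesis unfolding ho_def by linarith
qed

lemma E3_bound: assumes i: "4 \<le> i"
  shows "\<bar>(\<Sum>r\<in>{1..rmax i}. (1/2)^r * FF (wr i r)) - (real_of_int (ki i) + Tcal i)\<bar> \<le> 24 / real i"
proof -
  have i1: "1 \<le> i" using i by simp
  define k where "k = real_of_int (ki i)"
  define hE where "hE = he (pii i)"
  define hO where "hO = ho (pii i)"
  define L where "L = k + (2 * hO + hE) / 3 - 4 / 3"
  define R where "R = rmax i"
  define q where "q = (1/2::real) ^ R"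
  have Lk: "L = real_of_int (ki i) + Tcal i" unfolding L_def k_def hE_def hO_def Tcal_eq[OF i1] by simp
  have kb: "0 \<le> k" "k \<le> real i" unfolding k_def using ki_bounds[OF i1] by auto
  have hb: "\<bar>hE\<bar> \<le> 4" "\<bar>hO\<bar> \<le> 4" unfolding hE_def hO_def using he_bound ho_bound pii_bounds[OF i1] by auto
  have hb': "hE \<le> 4" "-hE \<le> 4" "hO \<le> 4" "-hO \<le> 4" using hb by (auto simp: abs_le_iff)
  have Lb: "\<bar>L\<bar> \<le> real i + 6" unfolding L_def abs_le_iff using kb hb' by (auto simp: field_simps)
  have Rb: "real R \<le> 2 * real i" unfolding R_def by (rule rmax_le[OF i1])
  have qb: "q \<le> 2 / (real i)^2" "0 \<le> q" unfolding q_def R_def using half_R[OF i1] by auto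
  have sumeq: "(\<Sum>r\<in>{1..R}. (1/2)^r * FF (wr i r)) = (\<Sum>r\<in>{1..R}. (1/2)^r * (k - real ((r + 1) div 2) + (if even r then hE else hO)))"
    unfolding k_def hE_def hO_def using FF_wr[OF i1] by (intro sum.cong) auto
  have main: "\<bar>(\<Sum>r\<in>{1..R}. (1/2)^r * (k - real ((r + 1) div 2) + (if even r then hE else hO))) - L\<bar> \<le> q * (3 * (real i + 6) + 3 * real i + 5)"
  proof (cases "even R")
    case True
    then obtain M where M: "R = 2 * M" by (auto elim: evenE)
    have q4: "(1/4::real)^M = q" unfolding q_def M by (simp add: power_mult power2_eq_square)
    have se: "(\<Sum>r\<in>{1..2*M}. (1/2)^r * (k - real ((r + 1) div 2) + (if even r then hE else hO))) = L - (1/4)^M * (L - real M)"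
      unfolding L_def by (rule S_even)
    have eqE: "(\<Sum>r\<in>{1..R}. (1/2)^r * (k - real ((r + 1) div 2) + (if even r then hE else hO))) - L = - q * (L - real M)"
      unfolding M se q4[symmetric] by simp
    have Mi: "real M \<le> real i" using Rb M by simp
    have "\<bar>L - real M\<bar> \<le> \<bar>L\<bar> + real i" using Mi by linarith
    then have "q * \<bar>L - real M\<bar> \<le> q * (\<bar>L\<bar> + real i)" using qb by (intro mult_left_mono) auto
    then have "\<bar>(\<Sum>r\<in>{1..R}. (1/2)^r * (k - real ((r + 1) div 2) + (if even r then hE else hO))) - L\<bar> \<le> q * (\<bar>L\<bar> + real i)"
      unfolding eqE using qb by (simp add: abs_mult)
    also have "\<dots> \<le> q * (3 * (real i + 6) + 3 * real i + 5)" using Lb qb by (intro mult_left_mono) auto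
    finally show ?thesis .
  next
    case False
    then obtain M where M: "R = 2 * M + 1" by (auto elim: oddE)
    have q4: "(1/4::real)^M = 2 * q" unfolding q_def M by (simp add: power_mult power2_eq_square)
    have e: "{1..R} = insert (2*M+1) {1..2*M}" unfolding M by auto
    have d: "(2 * M + 1 + 1) div 2 = M + 1" by simp
    have se: "(\<Sum>r\<in>{1..2*M}. (1/2)^r * (k - real ((r + 1) div 2) + (if even r then hE else hO))) = L - (1/4)^M * (L - real M)"
      unfolding L_def by (rule S_even)
    have "(\<Sum>r\<in>{1..R}. (1/2)^r * (k - real ((r + 1) div 2) + (if even r then hE else hO)))
        = q * (k - real (M + 1) + hO) + (\<Sum>r\<in>{1..2*M}. (1/2)^r * (k - real ((r + 1) div 2) + (if even r then hE else hO)))"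
      unfolding e q_def M by (simp add: d del: power_Suc)
    also have "\<dots> = q * (k - real (M + 1) + hO) + (L - 2 * q * (L - real M))"
      unfolding se q4 ..
    finally have eq: "(\<Sum>r\<in>{1..R}. (1/2)^r * (k - real ((r + 1) div 2) + (if even r then hE else hO))) - L
        = q * ((k - real (M + 1) + hO) - 2 * (L - real M))" by (simp add: algebra_simps)
    have Mb: "real M \<le> real i" using Rb M by simp
    have "\<bar>(k - real (M + 1) + hO) - 2 * (L - real M)\<bar> \<le> 3 * (real i + 6) + 3 * real i + 5"
    proof -
      have Lb': "L \<le> real i + 6" "- L \<le> real i + 6" using Lb by (auto simp: abs_le_iff)
      have m: "real (M + 1) = real M + 1" "0 \<le> real M" by simp_all
      show ?thesis unfolding abs_le_iff using kb hb' Lb' Mb m by (intro conjI; simp add: algebra_simps)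
    qed
    then show ?thesis unfolding eq abs_mult using qb by (simp add: mult_left_mono)
  qed
  also have "q * (3 * (real i + 6) + 3 * real i + 5) \<le> (2 / (real i)^2) * (12 * real i)"
    using qb i by (intro mult_mono) auto
  also have "\<dots> = 24 / real i" using i by (simp add: power2_eq_square)
  finally have fin: "\<bar>(\<Sum>r\<in>{1..R}. (1/2)^r * (k - real ((r + 1) div 2) + (if even r then hE else hO))) - L\<bar> \<le> 24 / real i" .
  have "(\<Sum>r\<in>{1..rmax i}. (1/2)^r * FF (wr i r)) - (real_of_int (ki i) + Tcal i)
     = (\<Sum>r\<in>{1..R}. (1/2)^r * (k - real ((r + 1) div 2) + (if even r then hE else hO))) - L"
    using sumeq Lk unfolding R_def by simp
  then show ?thesis using fin by simp
qed


lemma part2: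
  "\<exists>C. \<forall>i. even i \<and> 4 \<le> i \<longrightarrow>
            \<bar>expected_step3 i - (real_of_int \<lceil>log 2 (real i)\<rceil> + Tcal i)\<bar> \<le> C / real i"
proof (intro exI allI impI)
  fix i :: nat assume h: "even i \<and> 4 \<le> i"
  then have i: "4 \<le> i" by simp
  have i1: "1 \<le> i" using i by simp
  define R where "R = rmax i"
  define Q where "Q = real i * (real i - 1)"
  define F where "F r = FF (wr i r)" for r
  define \<delta> where "\<delta> r = tau i r - (1/2)^r" for r
  have Q0: "Q > 0" unfolding Q_def using i by simp
  have iQ: "real i / Q \<le> 2 / real i"
    unfolding Q_def using i by (simp add: field_simps)
  have xs: "(\<Sum>r\<in>{1..R}. xr i r) \<le> 3 * real i" by (rule xr_sum)
  have Rb: "real R \<le> 2 * real i" unfolding R_def by (rule rmax_le[OF i1])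
  have xnn: "\<And>r. 0 \<le> xr i r" by (rule xr_nonneg)
  have E1: "\<bar>(\<Sum>r\<in>{1..R}. PrR i r * Acal i r) - (\<Sum>r\<in>{1..R}. PrR i r * F r)\<bar> \<le> 1800 * real i / Q"
  proof -
    have "\<bar>(\<Sum>r\<in>{1..R}. PrR i r * Acal i r) - (\<Sum>r\<in>{1..R}. PrR i r * F r)\<bar>
        = \<bar>\<Sum>r\<in>{1..R}. (PrR i r * Acal i r - PrR i r * F r)\<bar>" by (simp add: sum_subtractf)
    also have "\<dots> \<le> (\<Sum>r\<in>{1..R}. \<bar>PrR i r * Acal i r - PrR i r * F r\<bar>)" by (rule sum_abs)
    also have "\<dots> \<le> (\<Sum>r\<in>{1..R}. 200 * (xr i r + 3) / Q)"
      unfolding F_def Q_def R_def by (intro sum_mono E1_term[OF i]) auto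
    also have "\<dots> = 200 * ((\<Sum>r\<in>{1..R}. xr i r) + 3 * real R) / Q"
      by (simp add: sum_divide_distrib[symmetric] sum_distrib_left[symmetric] sum.distrib)
    also have "\<dots> \<le> 200 * (3 * real i + 3 * (2 * real i)) / Q"
      using xs Rb Q0 by (intro divide_right_mono mult_left_mono add_mono) auto
    finally show ?thesis by simp
  qed
  have d0: "\<delta> 0 = 0" unfolding \<delta>_def using tau0[of i] i by simp
  have db: "\<bar>\<delta> r\<bar> \<le> 3 * xr i r / Q" for r unfolding \<delta>_def Q_def by (rule delta_bound[OF i])
  have E2eq: "(\<Sum>r\<in>{1..R}. PrR i r * F r) - (\<Sum>r\<in>{1..R}. (1/2)^r * F r)
      = (\<Sum>r\<in>{1..R}. (\<delta> (r - 1) - \<delta> r) * F r)"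
  proof -
    have "(\<Sum>r\<in>{1..R}. PrR i r * F r) - (\<Sum>r\<in>{1..R}. (1/2)^r * F r) = (\<Sum>r\<in>{1..R}. PrR i r * F r - (1/2)^r * F r)"
      by (simp add: sum_subtractf)
    also have "\<dots> = (\<Sum>r\<in>{1..R}. (\<delta> (r - 1) - \<delta> r) * F r)"
    proof (rule sum.cong)
      fix r assume r: "r \<in> {1..R}"
      then have r1: "1 \<le> r" "r \<le> rmax i" unfolding R_def by auto
      have p: "(1/2::real)^(r - 1) = 2 * (1/2)^r" using r1 by (cases r) auto
      show "PrR i r * F r - (1/2)^r * F r = (\<delta> (r - 1) - \<delta> r) * F r"
        unfolding PrR_tau[OF i r1] \<delta>_def p by (simp add: algebra_simps)
    qed simp
    finally show ?thesis .
  qed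
  have E2: "\<bar>(\<Sum>r\<in>{1..R}. PrR i r * F r) - (\<Sum>r\<in>{1..R}. (1/2)^r * F r)\<bar> \<le> (18 + 45 * real i) / Q"
  proof -
    have ab: "(\<Sum>r\<in>{1..R}. (\<delta> (r - 1) - \<delta> r) * F r) = \<delta> 0 * F 1 - \<delta> R * F (R + 1) + (\<Sum>r\<in>{1..R}. \<delta> r * (F (r + 1) - F r))"
      by (rule abel)
    have t1: "\<bar>\<delta> R * F (R + 1)\<bar> \<le> 18 / Q"
    proof -
      have xR: "xr i R < 2" unfolding R_def using rmax_xr_lt[OF i1] s2b by linarith
      have "\<bar>\<delta> R\<bar> \<le> 6 / Q"
      proof -
        have "3 * xr i R / Q \<le> 6 / Q" using xR Q0 by (intro divide_right_mono) auto
        then show ?thesis using db[of R] by linarith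
      qed
      moreover have "\<bar>F (R + 1)\<bar> \<le> 3" unfolding F_def R_def using FF_last[OF i1] by simp
      ultimately have "\<bar>\<delta> R\<bar> * \<bar>F (R + 1)\<bar> \<le> (6 / Q) * 3" using Q0 by (intro mult_mono) auto
      then show ?thesis by (simp add: abs_mult)
    qed
    have t2: "\<bar>\<Sum>r\<in>{1..R}. \<delta> r * (F (r + 1) - F r)\<bar> \<le> 45 * real i / Q"
    proof -
      have "\<bar>\<Sum>r\<in>{1..R}. \<delta> r * (F (r + 1) - F r)\<bar> \<le> (\<Sum>r\<in>{1..R}. \<bar>\<delta> r * (F (r + 1) - F r)\<bar>)" by (rule sum_abs)
      also have "\<dots> \<le> (\<Sum>r\<in>{1..R}. (3 * xr i r / Q) * 5)"
      proof (rule sum_mono)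
        fix r assume r: "r \<in> {1..R}"
        have x1: "1 \<le> xr i r" using r rmax_xr_ge1[OF i1] unfolding R_def by auto
        have wp: "wr i r > 0" unfolding wr_xr using x1 s2b by simp
        have "\<bar>F (r + 1) - F r\<bar> \<le> 5" unfolding F_def using FF_step[OF wp] wr_succ[of i r] by simp
        then have "\<bar>\<delta> r\<bar> * \<bar>F (r + 1) - F r\<bar> \<le> (3 * xr i r / Q) * 5" using db[of r] by (intro mult_mono) auto
        then show "\<bar>\<delta> r * (F (r + 1) - F r)\<bar> \<le> (3 * xr i r / Q) * 5" by (simp add: abs_mult)
      qed
      also have "\<dots> = (\<Sum>r\<in>{1..R}. 15 * xr i r) / Q"
        by (simp add: sum_divide_distrib[symmetric])
      also have "\<dots> = 15 * (\<Sum>r\<in>{1..R}. xr i r) / Q"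
        by (simp only: sum_distrib_left[symmetric])
      also have "\<dots> \<le> 15 * (3 * real i) / Q" using xs Q0 by (intro divide_right_mono) auto
      finally show ?thesis by simp
    qed
    show ?thesis unfolding E2eq ab d0 using t1 t2 Q0 by (simp add: add_divide_distrib)
  qed
  have E3: "\<bar>(\<Sum>r\<in>{1..R}. (1/2)^r * F r) - (real_of_int (ki i) + Tcal i)\<bar> \<le> 24 / real i"
    unfolding F_def R_def by (rule E3_bound[OF i])
  have ex: "expected_step3 i = (\<Sum>r\<in>{1..R}. PrR i r * Acal i r)" unfolding expected_step3_def R_def ..
  have kc: "real_of_int \<lceil>log 2 (real i)\<rceil> = real_of_int (ki i)" unfolding ki_def kk_def ..
  have tot: "\<bar>expected_step3 i - (real_of_int \<lceil>log 2 (real i)\<rceil> + Tcal i)\<bar>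
      \<le> 1800 * real i / Q + (18 + 45 * real i) / Q + 24 / real i"
    unfolding ex kc using E1 E2 E3 by linarith
  have b1: "1800 * real i / Q \<le> 3600 / real i"
  proof -
    have "1800 * real i / Q = 1800 * (real i / Q)" by simp
    also have "\<dots> \<le> 1800 * (2 / real i)" using iQ by (intro mult_left_mono) auto
    finally show ?thesis by simp
  qed
  have b2: "(18 + 45 * real i) / Q \<le> 100 / real i"
  proof -
    have "(18 + 45 * real i) / Q \<le> (50 * real i) / Q" using i Q0 by (intro divide_right_mono) auto
    also have "\<dots> = 50 * (real i / Q)" by simp
    also have "\<dots> \<le> 50 * (2 / real i)" using iQ by (intro mult_left_mono) auto
    finally show ?thesis by simp
  qed
  show "\<bar>expected_step3 i - (real_of_int \<lceil>log 2 (real i)\<rceil> + Tcal i)\<bar> \<le> 4000 / real i"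
    using tot b1 b2 i by (simp add: field_simps)
qed


theorem lemma1:
  shows "(\<exists>C. \<forall>i r. even i \<and> 4 \<le> i \<and> 1 \<le> r \<and> r \<le> rmax i \<and> PrR i r > 0 \<longrightarrow>
            \<bar>Acal i r - (real_of_int \<lceil>log 2 (wr i r)\<rceil> + 7 - 4 * sqrt 2
                 - (10 - 6 * sqrt 2) / px (wr i r) + (3 - 2 * sqrt 2) / (px (wr i r))\<^sup>2)\<bar>
              \<le> C * 2 powr (real r / 2) / real i)
       \<and> (\<exists>C. \<forall>i. even i \<and> 4 \<le> i \<longrightarrow>
            \<bar>expected_step3 i - (real_of_int \<lceil>log 2 (real i)\<rceil> + Tcal i)\<bar> \<le> C / real i)"
  using part1 part2 by blast

end
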